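(* The characters (non-zero multiplicative linear functionals) of the commutative Banach algebra $C(X)'_1$ are, without multiple occurrences, the following, where $\sum_k f_k\delta^k\in C(X)'_1$: (i) for $x\in X$ with $x\notin\bigcup_{q\ge1}\mathrm{Fix}_q(\sigma)^\circ$: $\omega_x\big(\sum_k f_k\delta^k\big)=f_0(x)$; (ii) for $x\in\bigcup_{q\ge1}\mathrm{Fix}_q(\sigma)^\circ$ and $c\in\mathbb{T}$: $\omega_{x,c}\big(\sum_k f_k\delta^k\big)=\sum_{j\in\mathbb{Z}} f_{jn}(x)c^j$, where $n$ is the minimal integer $n\ge1$ such that $x\in\mathrm{Fix}_n(\sigma)^\circ$. All characters of $C(X)'_1$ are hermitian (i.e. $\omega(a^* )=\overline{\omega(a)}$), and the map from the maximal ideal space $\Delta(C(X)'_1)$ to $\Delta(C(X))$ given by restriction of characters is a continuous surjection.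
   Context: Let $X$ be a non-empty compact Hausdorff space and $\sigma:X\to X$ a homeomorphism. For $n\in\mathbb{Z}$ let $\mathrm{Fix}_n(\sigma)=\{x\in X:\sigma^n x=x\}$; a superscript $\circ$ denotes interior in $X$, and $\mathrm{supp}(f)$ is the closure of $\{f\neq0\}$. $C(X)$ is the algebra of continuous complex functions on $X$ with sup norm $\|\cdot\|_\infty$, and $\alpha(f)=f\circ\sigma^{-1}$. $\ell^1(\Sigma)$ is the set of maps $\ell:\mathbb{Z}\to C(X)$ with $\|\ell\|=\sum_k\|\ell(k)\|_\infty<\infty$, with product $(\ell\ell')(n)=\sum_k\ell(k)\,\alpha^k(\ell'(n-k))$ and involution $\ell^*(n)=\overline{\alpha^n(\ell(-n))}$; it is a unital Banach $*$-algebra. Let $\delta$ be the element with $\delta(1)=1$ (constant function) and $\delta(m)=0$ for $m\neq1$; $C(X)$ is identified with $\{f\delta^0\}$, every element is uniquely written $\sum_k f_k\delta^k$ with $f_k=\ell(k)$, and $\delta f\delta^{-1}=f\circ\sigma^{-1}$, $\delta^*=\delta^{-1}$, $f^*=\bar f$. $C(X)'_1$ denotes the commutant of $C(X)$ in $\ell^1(\Sigma)$; it equals $\{\sum_k f_k\delta^k\in\ell^1(\Sigma):\mathrm{supp}(f_k)\subset\mathrm{Fix}_k(\sigma)\text{ for all }k\}$ and is a commutative closed unital $*$-subalgebra. Maximal ideal spaces carry the Gelfand (weak-$*$) topology; $\mathbb{T}$ is the unit circle. *)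

theory Defs
  imports "HOL-Analysis.Analysis"
begin

definition ipow :: "('a \<Rightarrow> 'a) \<Rightarrow> int \<Rightarrow> 'a \<Rightarrow> 'a" where
  "ipow \<sigma> k = (if 0 \<le> k then \<sigma> ^^ nat k else (inv \<sigma>) ^^ nat (- k))"

definition Fix :: "('a \<Rightarrow> 'a) \<Rightarrow> int \<Rightarrow> 'a set" where
  "Fix \<sigma> n = {x. ipow \<sigma> n x = x}"

definition supp :: "('a::topological_space \<Rightarrow> complex) \<Rightarrow> 'a set" where
  "supp f = closure {x. f x \<noteq> 0}"

definition supnorm :: "('a \<Rightarrow> complex) \<Rightarrow> real" where
  "supnorm f = (SUP x. cmod (f x))"

text \<open>C(X): continuous complex functions on X (= UNIV of the type).\<close>
definition CX :: "('a::topological_space \<Rightarrow> complex) set" where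
  "CX = {f. continuous_on UNIV f}"

text \<open>l^1(Sigma): maps Z -> C(X) with summable sup norms; an element l is
  the formal sum of (l k) delta^k.\<close>
definition ell1 :: "(int \<Rightarrow> 'a::topological_space \<Rightarrow> complex) set" where
  "ell1 = {l. (\<forall>k. l k \<in> CX) \<and> (\<lambda>k. supnorm (l k)) summable_on UNIV}"

text \<open>alpha^k(f) = f o sigma^(-k).\<close>
definition ell_mult :: "('a \<Rightarrow> 'a) \<Rightarrow> (int \<Rightarrow> 'a \<Rightarrow> complex) \<Rightarrow> (int \<Rightarrow> 'a \<Rightarrow> complex)
    \<Rightarrow> (int \<Rightarrow> 'a \<Rightarrow> complex)" where
  "ell_mult \<sigma> l l' = (\<lambda>n x. \<Sum>\<^sub>\<infinity>k. l k x * l' (n - k) (ipow \<sigma> (- k) x))"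

definition ell_star :: "('a \<Rightarrow> 'a) \<Rightarrow> (int \<Rightarrow> 'a \<Rightarrow> complex) \<Rightarrow> (int \<Rightarrow> 'a \<Rightarrow> complex)" where
  "ell_star \<sigma> l = (\<lambda>n x. cnj (l (- n) (ipow \<sigma> (- n) x)))"

definition ell_add :: "(int \<Rightarrow> 'a \<Rightarrow> complex) \<Rightarrow> (int \<Rightarrow> 'a \<Rightarrow> complex) \<Rightarrow> (int \<Rightarrow> 'a \<Rightarrow> complex)" where
  "ell_add l l' = (\<lambda>n x. l n x + l' n x)"

definition ell_smult :: "complex \<Rightarrow> (int \<Rightarrow> 'a \<Rightarrow> complex) \<Rightarrow> (int \<Rightarrow> 'a \<Rightarrow> complex)" where
  "ell_smult c l = (\<lambda>n x. c * l n x)"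

definition emb :: "('a \<Rightarrow> complex) \<Rightarrow> (int \<Rightarrow> 'a \<Rightarrow> complex)" where
  "emb f = (\<lambda>k. if k = 0 then f else (\<lambda>_. 0))"

definition commutant1 :: "('a::topological_space \<Rightarrow> 'a) \<Rightarrow> (int \<Rightarrow> 'a \<Rightarrow> complex) set" where
  "commutant1 \<sigma> = {a \<in> ell1. \<forall>f \<in> CX. ell_mult \<sigma> a (emb f) = ell_mult \<sigma> (emb f) a}"

definition is_character :: "'b set \<Rightarrow> ('b \<Rightarrow> 'b \<Rightarrow> 'b) \<Rightarrow> ('b \<Rightarrow> 'b \<Rightarrow> 'b)
    \<Rightarrow> (complex \<Rightarrow> 'b \<Rightarrow> 'b) \<Rightarrow> ('b \<Rightarrow> complex) \<Rightarrow> bool" where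
  "is_character S ad mu sm \<omega> \<longleftrightarrow>
     (\<forall>a\<in>S. \<forall>b\<in>S. \<omega> (ad a b) = \<omega> a + \<omega> b) \<and>
     (\<forall>c. \<forall>a\<in>S. \<omega> (sm c a) = c * \<omega> a) \<and>
     (\<forall>a\<in>S. \<forall>b\<in>S. \<omega> (mu a b) = \<omega> a * \<omega> b) \<and>
     (\<exists>a\<in>S. \<omega> a \<noteq> 0)"

definition char_space :: "'b set \<Rightarrow> ('b \<Rightarrow> 'b \<Rightarrow> 'b) \<Rightarrow> ('b \<Rightarrow> 'b \<Rightarrow> 'b)
    \<Rightarrow> (complex \<Rightarrow> 'b \<Rightarrow> 'b) \<Rightarrow> ('b \<Rightarrow> complex) set" where
  "char_space S ad mu sm = {\<omega> \<in> extensional S. is_character S ad mu sm \<omega>}"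

text \<open>Gelfand (weak-*) topology: topology of pointwise convergence on S.\<close>
definition gelfand_top :: "'b set \<Rightarrow> ('b \<Rightarrow> complex) set \<Rightarrow> ('b \<Rightarrow> complex) topology" where
  "gelfand_top S D = subtopology (product_topology (\<lambda>_. euclidean) S) D"

definition DeltaA :: "('a::topological_space \<Rightarrow> 'a) \<Rightarrow> ((int \<Rightarrow> 'a \<Rightarrow> complex) \<Rightarrow> complex) set" where
  "DeltaA \<sigma> = char_space (commutant1 \<sigma>) ell_add (ell_mult \<sigma>) ell_smult"

definition DeltaCX :: "(('a::topological_space \<Rightarrow> complex) \<Rightarrow> complex) set" where
  "DeltaCX = char_space CX (\<lambda>f g x. f x + g x) (\<lambda>f g x. f x * g x) (\<lambda>c f x. c * f x)"

definition restr_char :: "((int \<Rightarrow> 'a \<Rightarrow> complex) \<Rightarrow> complex) \<Rightarrow> ('a::topological_space \<Rightarrow> complex) \<Rightarrow> complex" where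
  "restr_char \<omega> = restrict (\<lambda>f. \<omega> (emb f)) CX"

definition PerInt :: "('a::topological_space \<Rightarrow> 'a) \<Rightarrow> 'a set" where
  "PerInt \<sigma> = (\<Union>q\<in>{1::nat..}. interior (Fix \<sigma> (int q)))"

definition minper :: "('a::topological_space \<Rightarrow> 'a) \<Rightarrow> 'a \<Rightarrow> nat" where
  "minper \<sigma> x = (LEAST n::nat. 1 \<le> n \<and> x \<in> interior (Fix \<sigma> (int n)))"

definition omega_x :: "('a::topological_space \<Rightarrow> 'a) \<Rightarrow> 'a \<Rightarrow> (int \<Rightarrow> 'a \<Rightarrow> complex) \<Rightarrow> complex" where
  "omega_x \<sigma> x = restrict (\<lambda>a. a 0 x) (commutant1 \<sigma>)"

definition omega_xc :: "('a::topological_space \<Rightarrow> 'a) \<Rightarrow> 'a \<Rightarrow> complex \<Rightarrow> (int \<Rightarrow> 'a \<Rightarrow> complex) \<Rightarrow> complex" where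
  "omega_xc \<sigma> x c = restrict
     (\<lambda>a. \<Sum>\<^sub>\<infinity>j::int. a (j * int (minper \<sigma> x)) x * c powi j) (commutant1 \<sigma>)"

end

theory Submission
  imports Defs
begin


locale setting =
  fixes \<sigma> \<sigma>' :: "'a::t2_space \<Rightarrow> 'a"
  assumes cpt: "compact (UNIV::'a set)"
    and hom: "homeomorphism UNIV UNIV \<sigma> \<sigma>'"
begin

lemma s1: "\<sigma>' (\<sigma> x) = x" and s2: "\<sigma> (\<sigma>' x) = x"
  using hom by (auto simp: homeomorphism_def)

lemma cont_s: "continuous_on UNIV \<sigma>" and cont_s': "continuous_on UNIV \<sigma>'"
  using hom by (auto simp: homeomorphism_def)

lemma inv_s: "inv \<sigma> = \<sigma>'"
  by (metis s1 s2 inv_equality ext)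

lemma ipow_def': "ipow \<sigma> k = (if 0 \<le> k then \<sigma> ^^ nat k else \<sigma>' ^^ nat (- k))"
  by (simp add: ipow_def inv_s)

lemma ipow_0[simp]: "ipow \<sigma> 0 x = x"
  by (simp add: ipow_def')

lemma ipow_succ: "ipow \<sigma> (k + 1) x = \<sigma> (ipow \<sigma> k x)"
proof (cases "0 \<le> k")
  case True
  then have e: "nat (k+1) = Suc (nat k)" by simp
  have "ipow \<sigma> (k + 1) x = (\<sigma> ^^ nat (k+1)) x" using True by (simp add: ipow_def')
  also have "\<dots> = \<sigma> ((\<sigma> ^^ nat k) x)" unfolding e by simp
  finally show ?thesis using True by (simp add: ipow_def')
next
  case False
  then obtain m where m: "nat (-k) = Suc m" "nat (-(k+1)) = m"
    by (intro that[of "nat (-(k+1))"]) auto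
  show ?thesis
  proof (cases "k = -1")
    case True then show ?thesis by (simp add: ipow_def' s2)
  next
    case F2: False
    have "ipow \<sigma> k x = (\<sigma>' ^^ nat (-k)) x" using False by (simp add: ipow_def')
    also have "\<dots> = \<sigma>' ((\<sigma>' ^^ m) x)" unfolding m by simp
    finally have a: "ipow \<sigma> k x = \<sigma>' ((\<sigma>' ^^ m) x)" .
    have "ipow \<sigma> (k+1) x = (\<sigma>' ^^ m) x" using False F2 m by (simp add: ipow_def')
    then show ?thesis using a s2 by simp
  qed
qed

lemma ipow_pred: "ipow \<sigma> (k - 1) x = \<sigma>' (ipow \<sigma> k x)"
  using ipow_succ[of "k - 1" x] s1 by (metis diff_add_cancel)

lemma ipow_add: "ipow \<sigma> (a + b) x = ipow \<sigma> a (ipow \<sigma> b x)"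
proof (induction a rule: int_induct[where k=0])
  case base then show ?case by simp
next
  case (step1 i)
  have "ipow \<sigma> (i + 1 + b) x = ipow \<sigma> ((i + b) + 1) x" by (simp add: algebra_simps)
  also have "\<dots> = \<sigma> (ipow \<sigma> (i + b) x)" by (rule ipow_succ)
  finally show ?case using step1 by (simp add: ipow_succ)
next
  case (step2 i)
  have "ipow \<sigma> (i - 1 + b) x = ipow \<sigma> ((i + b) - 1) x" by (simp add: algebra_simps)
  also have "\<dots> = \<sigma>' (ipow \<sigma> (i + b) x)" by (rule ipow_pred)
  finally show ?case using step2 by (simp add: ipow_pred)
qed

lemma ipow_neg_cancel[simp]: "ipow \<sigma> (- k) (ipow \<sigma> k x) = x"
  using ipow_add[of "-k" k x] by simp

lemma ipow_cancel_neg[simp]: "ipow \<sigma> k (ipow \<sigma> (- k) x) = x"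
  using ipow_add[of k "-k" x] by simp

lemma ipow_cont: "continuous_on UNIV (ipow \<sigma> k)"
proof (induction k rule: int_induct[where k=0])
  case base
  have "ipow \<sigma> 0 = (\<lambda>x. x)" by (rule ext) simp
  then show ?case by simp
next
  case (step1 i)
  have "ipow \<sigma> (i+1) = \<sigma> \<circ> ipow \<sigma> i" by (rule ext) (simp add: ipow_succ)
  then show ?case using step1 cont_s by (metis continuous_on_compose continuous_on_subset subset_UNIV)
next
  case (step2 i)
  have "ipow \<sigma> (i-1) = \<sigma>' \<circ> ipow \<sigma> i" by (rule ext) (simp add: ipow_pred)
  then show ?case using step2 cont_s' by (metis continuous_on_compose continuous_on_subset subset_UNIV)
qed

lemma ipow_cont_comp: "continuous_on UNIV f \<Longrightarrow> continuous_on UNIV (\<lambda>x. f (ipow \<sigma> k x))"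
  using continuous_on_compose[OF ipow_cont[of k], of f] continuous_on_subset[of UNIV f] by (simp add: o_def)

lemma Fix_iff: "x \<in> Fix \<sigma> k \<longleftrightarrow> ipow \<sigma> k x = x"
  by (simp add: Fix_def)

lemma closed_Fix: "closed (Fix \<sigma> k)"
  unfolding Fix_def by (rule closed_Collect_eq) (auto intro: ipow_cont)

lemma Fix_neg: "x \<in> Fix \<sigma> k \<Longrightarrow> x \<in> Fix \<sigma> (- k)"
proof -
  assume "x \<in> Fix \<sigma> k"
  then have "ipow \<sigma> k x = x" by (simp add: Fix_def)
  then have "ipow \<sigma> (-k) x = ipow \<sigma> (-k) (ipow \<sigma> k x)" by simp
  then show ?thesis by (simp add: Fix_def)
qed

lemma Fix_neg_iff: "x \<in> Fix \<sigma> (- k) \<longleftrightarrow> x \<in> Fix \<sigma> k"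
  using Fix_neg[of x k] Fix_neg[of x "-k"] by auto

lemma Fix_add: "x \<in> Fix \<sigma> a \<Longrightarrow> x \<in> Fix \<sigma> b \<Longrightarrow> x \<in> Fix \<sigma> (a + b)"
  unfolding Fix_def by (simp add: ipow_add[of a b x])

lemma Fix_mult: assumes xk: "x \<in> Fix \<sigma> k" shows "x \<in> Fix \<sigma> (j * k)"
proof (induction j rule: int_induct[where k=0])
  case base then show ?case by (simp add: Fix_def)
next
  case (step1 i)
  have "(i + 1) * k = i * k + k" by (simp add: algebra_simps)
  then show ?case using Fix_add[OF step1(2) xk] by simp
next
  case (step2 i)
  have "(i - 1) * k = i * k + (- k)" by (simp add: algebra_simps)
  then show ?case using Fix_add[OF step2(2) Fix_neg[OF xk]] by simp
qed

lemma Fix_gcd: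
  assumes "x \<in> Fix \<sigma> a" "x \<in> Fix \<sigma> b" shows "x \<in> Fix \<sigma> (gcd a b)"
proof -
  obtain u v where e: "u * a + v * b = gcd a b" using bezout_int by blast
  have "x \<in> Fix \<sigma> (u * a + v * b)" by (rule Fix_add[OF Fix_mult[OF assms(1)] Fix_mult[OF assms(2)]])
  then show ?thesis unfolding e .
qed

lemma Fix_0[simp]: "x \<in> Fix \<sigma> 0" by (simp add: Fix_def)

lemma Fix_neg_apply: "x \<in> Fix \<sigma> k \<Longrightarrow> ipow \<sigma> (- k) x = x"
  using Fix_neg[of x k] unfolding Fix_iff .

end


context setting begin

lemma normal_eucl: "normal_space (euclidean :: 'a topology)"
proof (rule compact_Hausdorff_or_regular_imp_normal_space)
  show "compact_space (euclidean :: 'a topology)"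
    using cpt by (simp add: compact_space_def)
  show "Hausdorff_space (euclidean :: 'a topology) \<or> regular_space (euclidean :: 'a topology)"
    unfolding Hausdorff_space_def disjnt_def using hausdorff by auto
qed

lemma ury:
  assumes "closed S" "closed T" "S \<inter> T = {}"
  shows "\<exists>f :: 'a \<Rightarrow> real. continuous_on UNIV f \<and> (\<forall>y. 0 \<le> f y \<and> f y \<le> 1) \<and>
    (\<forall>y\<in>S. f y = 0) \<and> (\<forall>y\<in>T. f y = 1)"
proof -
  have "(0::real) \<le> 1" by simp
  from Urysohn_lemma[OF normal_eucl _ _ _ this, of S T] assms
  obtain f where f: "continuous_map euclidean (top_of_set {0::real..1}) f" "f ` S \<subseteq> {0}" "f ` T \<subseteq> {1}"
    by (auto simp: disjnt_def)
  have "continuous_on UNIV f" "\<And>y. f y \<in> {0..1}"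
    using f(1) unfolding continuous_map_in_subtopology by auto
  then show ?thesis using f(2,3) by (intro exI[of _ f]) auto
qed

lemma cury:
  assumes "closed S" "closed T" "S \<inter> T = {}"
  shows "\<exists>f :: 'a \<Rightarrow> complex. continuous_on UNIV f \<and> (\<forall>y. cmod (f y) \<le> 1) \<and>
    (\<forall>y\<in>S. f y = 0) \<and> (\<forall>y\<in>T. f y = 1) \<and> (\<forall>y. f y \<in> \<real> \<and> 0 \<le> Re (f y))"
proof -
  obtain g :: "'a \<Rightarrow> real" where g: "continuous_on UNIV g" "\<forall>y. 0 \<le> g y \<and> g y \<le> 1"
    "\<forall>y\<in>S. g y = 0" "\<forall>y\<in>T. g y = 1"
    using ury[OF assms] by blast
  have "continuous_on UNIV (\<lambda>y. complex_of_real (g y))" using continuous_on_of_real[OF g(1)] .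
  then show ?thesis using g(2,3,4) by (intro exI[of _ "\<lambda>y. complex_of_real (g y)"]) auto
qed

lemma sep_points:
  assumes "x \<noteq> y"
  shows "\<exists>f :: 'a \<Rightarrow> complex. continuous_on UNIV f \<and> f x = 0 \<and> f y = 1"
proof -
  have "closed {x}" "closed {y}" "{x} \<inter> {y} = {}" using assms by auto
  from cury[OF this] show ?thesis by auto
qed

type_synonym 'b fn = "'b \<Rightarrow> complex"


lemma CX_iff: "f \<in> CX \<longleftrightarrow> continuous_on UNIV f" by (simp add: CX_def)

lemma CX_bdd: "(f::'a fn) \<in> CX \<Longrightarrow> bdd_above (range (\<lambda>x. cmod (f x)))"
proof -
  assume "f \<in> CX"
  then have "compact (f ` UNIV)" using cpt by (intro compact_continuous_image) (auto simp: CX_def)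
  then have "bounded (range f)" by (rule compact_imp_bounded)
  then obtain B where "\<forall>y\<in>range f. norm y \<le> B" unfolding bounded_iff by blast
  then show ?thesis by (auto simp: bdd_above_def)
qed

lemma sn_ge: "(f::'a fn) \<in> CX \<Longrightarrow> cmod (f x) \<le> supnorm f"
  unfolding supnorm_def by (rule cSUP_upper[OF _ CX_bdd]) auto

lemma sn_le: "(\<And>x. cmod (f x) \<le> M) \<Longrightarrow> supnorm f \<le> M"
  unfolding supnorm_def by (rule cSUP_least) auto

lemma sn_nonneg: "(f::'a fn) \<in> CX \<Longrightarrow> 0 \<le> supnorm f"
proof -
  assume "f \<in> CX" from sn_ge[OF this, of undefined] show ?thesis using norm_ge_zero[of "f undefined"] by linarith
qed

lemma sn_zero[simp]: "supnorm (\<lambda>_. 0) = 0"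
  by (simp add: supnorm_def)

lemma sn_le_nonneg: "(\<And>x. cmod (f x) \<le> M) \<Longrightarrow> 0 \<le> M"
proof -
  assume "\<And>x. cmod (f x) \<le> M" from this[of undefined] show ?thesis using norm_ge_zero[of "f undefined"] by linarith
qed

lemma CX_const[simp]: "(\<lambda>_. c) \<in> CX" by (simp add: CX_def)
lemma CX_add: "f \<in> CX \<Longrightarrow> g \<in> CX \<Longrightarrow> (\<lambda>x. f x + g x) \<in> CX"
  by (auto simp: CX_def intro!: continuous_intros)
lemma CX_mult: "f \<in> CX \<Longrightarrow> g \<in> CX \<Longrightarrow> (\<lambda>x. f x * g x) \<in> CX"
  by (auto simp: CX_def intro!: continuous_intros)
lemma CX_cmult: "f \<in> CX \<Longrightarrow> (\<lambda>x. c * f x) \<in> CX"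
  by (auto simp: CX_def intro!: continuous_intros)
lemma CX_cnj: "f \<in> CX \<Longrightarrow> (\<lambda>x. cnj (f x)) \<in> CX"
  by (auto simp: CX_def intro!: continuous_intros)
lemma CX_ipow: "f \<in> CX \<Longrightarrow> (\<lambda>x. f (ipow \<sigma> k x)) \<in> CX"
  by (auto simp: CX_def intro!: ipow_cont_comp)

end


type_synonym 'b el = "int \<Rightarrow> 'b \<Rightarrow> complex"

definition nrm :: "'b el \<Rightarrow> real" where
  "nrm a = infsum (\<lambda>k. supnorm (a k)) UNIV"

definition sgl :: "int \<Rightarrow> ('b \<Rightarrow> complex) \<Rightarrow> 'b el" where
  "sgl k f = (\<lambda>j. if j = k then f else (\<lambda>_. 0))"

definition trunc :: "int set \<Rightarrow> 'b el \<Rightarrow> 'b el" where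
  "trunc F a = (\<lambda>k. if k \<in> F then a k else (\<lambda>_. 0))"

definition good :: "('b \<Rightarrow> 'b) \<Rightarrow> 'b el \<Rightarrow> bool" where
  "good s a \<longleftrightarrow> (\<forall>n x. a n x \<noteq> 0 \<longrightarrow> x \<in> Fix s n)"

lemma emb_sgl: "emb f = sgl 0 f"
  by (simp add: emb_def sgl_def)

lemma infsum_pt:
  fixes g :: "'i \<Rightarrow> 'b::{comm_monoid_add, t2_space}"
  assumes "\<And>k. k \<noteq> n \<Longrightarrow> g k = 0"
  shows "infsum g UNIV = g n"
proof -
  have "infsum g UNIV = infsum g {n}"
    by (rule infsum_cong_neutral) (use assms in auto)
  then show ?thesis by simp
qed

lemma summable_pt:
  fixes g :: "'i \<Rightarrow> 'b::{comm_monoid_add, t2_space}"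
  assumes "\<And>k. k \<noteq> n \<Longrightarrow> g k = 0"
  shows "g summable_on UNIV"
proof -
  have "g summable_on {n}" by simp
  then show ?thesis
    by (rule summable_on_cong_neutral[THEN iffD1, rotated -1]) (use assms in auto)
qed

lemma csum_bound:
  fixes g :: "'i \<Rightarrow> complex"
  assumes "M summable_on A" "\<And>k. k \<in> A \<Longrightarrow> cmod (g k) \<le> M k"
  shows "g summable_on A" "cmod (infsum g A) \<le> infsum M A"
proof -
  have "(\<lambda>k. norm (g k)) summable_on A"
    by (rule summable_on_comparison_test[OF assms(1)]) (use assms(2) in auto)
  then have abs: "(\<lambda>k. norm (g k)) summable_on A" by simp
  then show "g summable_on A" by (rule summable_on_iff_abs_summable_on_complex[THEN iffD2])
  have "cmod (infsum g A) \<le> infsum (\<lambda>k. norm (g k)) A" by (rule norm_infsum_bound[OF abs])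
  also have "\<dots> \<le> infsum M A"
    by (rule infsum_mono[OF \<open>(\<lambda>k. norm (g k)) summable_on A\<close> assms(1)]) (use assms(2) in auto)
  finally show "cmod (infsum g A) \<le> infsum M A" .
qed

lemma elem_le_infsum:
  fixes M :: "'i \<Rightarrow> real"
  assumes "M summable_on UNIV" "\<And>k. 0 \<le> M k"
  shows "M k \<le> infsum M UNIV"
  using finite_sum_le_infsum[OF assms(1), of "{k}"] assms(2) by simp

context setting begin

lemma ell1_iff: "a \<in> ell1 \<longleftrightarrow> (\<forall>k. a k \<in> CX) \<and> (\<lambda>k. supnorm (a k)) summable_on UNIV"
  by (simp add: ell1_def)

lemma ell1_pt: "(a :: 'a el) \<in> ell1 \<Longrightarrow> cmod (a k x) \<le> supnorm (a k)"
  by (rule sn_ge) (simp add: ell1_def)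

lemma ell1_sn_nonneg: "(a :: 'a el) \<in> ell1 \<Longrightarrow> 0 \<le> supnorm (a k)"
  by (rule sn_nonneg) (simp add: ell1_def)

lemma ell1_CX: "(a :: 'a el) \<in> ell1 \<Longrightarrow> a k \<in> CX"
  by (simp add: ell1_def)

lemma ell1_summ: "(a :: 'a el) \<in> ell1 \<Longrightarrow> (\<lambda>k. supnorm (a k)) summable_on UNIV"
  by (simp add: ell1_def)

lemma nrm_ge: "(a :: 'a el) \<in> ell1 \<Longrightarrow> supnorm (a k) \<le> nrm a"
  unfolding nrm_def by (rule elem_le_infsum) (auto simp: ell1_summ ell1_sn_nonneg)

lemma nrm_nonneg: "(a :: 'a el) \<in> ell1 \<Longrightarrow> 0 \<le> nrm a"
  using nrm_ge[of a 0] ell1_sn_nonneg[of a 0] by linarith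

lemma ell1_pt_nrm: "(a :: 'a el) \<in> ell1 \<Longrightarrow> cmod (a k x) \<le> nrm a"
  using nrm_ge[of a k] ell1_pt[of a k x] by linarith

lemma ell1_bound:
  fixes a :: "'a el"
  assumes "\<And>k. a k \<in> CX" "\<And>k x. cmod (a k x) \<le> M k" "M summable_on UNIV"
  shows "a \<in> ell1" "nrm a \<le> infsum M UNIV"
proof -
  have le: "supnorm (a k) \<le> M k" for k by (rule sn_le) (rule assms(2))
  have ge: "0 \<le> supnorm (a k)" for k by (rule sn_nonneg[OF assms(1)])
  have s: "(\<lambda>k. supnorm (a k)) summable_on UNIV"
    by (rule summable_on_comparison_test[OF assms(3)]) (use le ge in auto)
  then show "a \<in> ell1" using assms(1) by (simp add: ell1_def)
  show "nrm a \<le> infsum M UNIV" unfolding nrm_def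
    by (rule infsum_mono[OF s assms(3)]) (use le in auto)
qed

lemma mult_emb_r: "ell_mult \<sigma> a (emb f) n x = a n x * f (ipow \<sigma> (- n) x)"
proof -
  have "ell_mult \<sigma> a (emb f) n x = (\<Sum>\<^sub>\<infinity>k. a k x * emb f (n - k) (ipow \<sigma> (- k) x))"
    by (simp add: ell_mult_def)
  also have "\<dots> = a n x * emb f (n - n) (ipow \<sigma> (- n) x)"
    by (rule infsum_pt) (simp add: emb_def)
  finally show ?thesis by (simp add: emb_def)
qed

lemma mult_emb_l: "ell_mult \<sigma> (emb f) a = (\<lambda>n x. f x * a n x)"
proof (intro ext)
  fix n x
  have "ell_mult \<sigma> (emb f) a n x = (\<Sum>\<^sub>\<infinity>k. emb f k x * a (n - k) (ipow \<sigma> (- k) x))"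
    by (simp add: ell_mult_def)
  also have "\<dots> = emb f 0 x * a (n - 0) (ipow \<sigma> (- 0) x)"
    by (rule infsum_pt) (simp add: emb_def)
  finally show "ell_mult \<sigma> (emb f) a n x = f x * a n x" by (simp add: emb_def)
qed

lemma comm_iff: "a \<in> commutant1 \<sigma> \<longleftrightarrow> a \<in> ell1 \<and> good \<sigma> (a :: 'a el)"
proof
  assume "a \<in> ell1 \<and> good \<sigma> a"
  then have a: "a \<in> ell1" "good \<sigma> a" by auto
  have "ell_mult \<sigma> a (emb f) = ell_mult \<sigma> (emb f) a" for f
  proof (intro ext)
    fix n x
    show "ell_mult \<sigma> a (emb f) n x = ell_mult \<sigma> (emb f) a n x"
    proof (cases "a n x = 0")
      case True then show ?thesis by (simp add: mult_emb_r mult_emb_l)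
    next
      case False
      then have "x \<in> Fix \<sigma> n" using a(2) by (auto simp: good_def)
      then have "ipow \<sigma> (- n) x = x" by (rule Fix_neg_apply)
      then show ?thesis by (simp add: mult_emb_r mult_emb_l)
    qed
  qed
  then show "a \<in> commutant1 \<sigma>" using a(1) by (simp add: commutant1_def)
next
  assume A: "a \<in> commutant1 \<sigma>"
  then have a: "a \<in> ell1" by (simp add: commutant1_def)
  have "x \<in> Fix \<sigma> n" if nz: "a n x \<noteq> 0" for n x
  proof (rule ccontr)
    assume "x \<notin> Fix \<sigma> n"
    then have "ipow \<sigma> (- n) x \<noteq> x" using Fix_neg_iff[of x n] by (simp add: Fix_iff)
    then obtain f :: "'a \<Rightarrow> complex" where f: "continuous_on UNIV f" "f x = 0" "f (ipow \<sigma> (- n) x) = 1"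
      using sep_points[of x "ipow \<sigma> (- n) x"] by auto
    then have "f \<in> CX" by (simp add: CX_def)
    then have "ell_mult \<sigma> a (emb f) = ell_mult \<sigma> (emb f) a" using A by (simp add: commutant1_def)
    then have "ell_mult \<sigma> a (emb f) n x = ell_mult \<sigma> (emb f) a n x" by simp
    then have "a n x = 0" using f by (simp add: mult_emb_r mult_emb_l)
    then show False using nz by simp
  qed
  then show "a \<in> ell1 \<and> good \<sigma> a" using a by (auto simp: good_def)
qed

abbreviation "AA \<equiv> commutant1 \<sigma>"

lemma AA_ell1: "a \<in> AA \<Longrightarrow> a \<in> ell1" by (simp add: comm_iff)
lemma AA_good: "a \<in> AA \<Longrightarrow> a n x \<noteq> 0 \<Longrightarrow> x \<in> Fix \<sigma> n" by (simp add: comm_iff good_def)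
lemma AA_goodI: "a \<in> ell1 \<Longrightarrow> (\<And>n x. a n x \<noteq> 0 \<Longrightarrow> x \<in> Fix \<sigma> n) \<Longrightarrow> a \<in> AA"
  by (simp add: comm_iff good_def)

lemma sgl_in:
  assumes "f \<in> CX" "\<And>x. f x \<noteq> 0 \<Longrightarrow> x \<in> Fix \<sigma> k"
  shows "sgl k f \<in> AA" "nrm (sgl k f) \<le> supnorm f"
proof -
  have b: "sgl k f j \<in> CX" "cmod (sgl k f j x) \<le> (if j = k then supnorm f else 0)" for j x
    using assms(1) sn_ge[OF assms(1)] by (auto simp: sgl_def)
  have s: "(\<lambda>j. if j = k then supnorm f else 0) summable_on UNIV" by (rule summable_pt) auto
  have i: "infsum (\<lambda>j. if j = k then supnorm f else 0) UNIV = supnorm f" by (subst infsum_pt[where n=k]) auto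
  show "sgl k f \<in> AA" using ell1_bound(1)[OF b s]
    by (rule AA_goodI) (use assms(2) in \<open>auto simp: sgl_def split: if_splits\<close>)
  show "nrm (sgl k f) \<le> supnorm f" using ell1_bound(2)[OF b s] i by simp
qed

lemma emb_in: "f \<in> CX \<Longrightarrow> emb f \<in> AA"
  unfolding emb_sgl by (rule sgl_in) auto

lemma add_in:
  assumes "a \<in> AA" "b \<in> AA" shows "ell_add a b \<in> AA"
proof -
  have a: "a \<in> ell1" "b \<in> ell1" using assms AA_ell1 by auto
  have "ell_add a b k \<in> CX" for k using ell1_CX[OF a(1)] ell1_CX[OF a(2)] by (simp add: ell_add_def CX_add)
  moreover have "cmod (ell_add a b k x) \<le> supnorm (a k) + supnorm (b k)" for k x
    using ell1_pt[OF a(1), of k x] ell1_pt[OF a(2), of k x] norm_triangle_ineq[of "a k x" "b k x"]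
    by (simp add: ell_add_def)
  moreover have "(\<lambda>k. supnorm (a k) + supnorm (b k)) summable_on UNIV"
    by (intro summable_on_add ell1_summ a)
  ultimately have "ell_add a b \<in> ell1" by (rule ell1_bound(1))
  then show ?thesis
  proof (rule AA_goodI)
    fix n x assume "ell_add a b n x \<noteq> 0"
    then have "a n x \<noteq> 0 \<or> b n x \<noteq> 0" by (auto simp: ell_add_def)
    then show "x \<in> Fix \<sigma> n" using AA_good[OF assms(1)] AA_good[OF assms(2)] by blast
  qed
qed

lemma smult_in:
  assumes "a \<in> AA" shows "ell_smult c a \<in> AA" "nrm (ell_smult c a) \<le> cmod c * nrm a"
proof -
  have a: "a \<in> ell1" using assms AA_ell1 by auto
  have b: "ell_smult c a k \<in> CX" for k using ell1_CX[OF a] by (simp add: ell_smult_def CX_cmult)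
  have c: "cmod (ell_smult c a k x) \<le> cmod c * supnorm (a k)" for k x
    using ell1_pt[OF a, of k x] by (simp add: ell_smult_def norm_mult mult_left_mono)
  have s: "(\<lambda>k. cmod c * supnorm (a k)) summable_on UNIV"
    by (intro summable_on_cmult_right ell1_summ a)
  show "ell_smult c a \<in> AA" using ell1_bound(1)[OF b c s]
    by (rule AA_goodI) (use assms in \<open>auto simp: ell_smult_def dest: AA_good\<close>)
  have "infsum (\<lambda>k. cmod c * supnorm (a k)) UNIV = cmod c * nrm a"
    unfolding nrm_def by (rule infsum_cmult_right) (rule ell1_summ[OF a])
  then show "nrm (ell_smult c a) \<le> cmod c * nrm a" using ell1_bound(2)[OF b c s] by simp
qed

lemma trunc_in:
  assumes "a \<in> AA" shows "trunc F a \<in> AA" "nrm (trunc F a) \<le> infsum (\<lambda>k. supnorm (a k)) F"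
proof -
  have a: "a \<in> ell1" using assms AA_ell1 by auto
  have b: "trunc F a k \<in> CX" for k using ell1_CX[OF a] by (simp add: trunc_def)
  have c: "cmod (trunc F a k x) \<le> (if k \<in> F then supnorm (a k) else 0)" for k x
    using ell1_pt[OF a, of k x] by (simp add: trunc_def)
  have s: "(\<lambda>k. if k \<in> F then supnorm (a k) else 0) summable_on UNIV"
    by (rule summable_on_comparison_test[OF ell1_summ[OF a]]) (auto simp: ell1_sn_nonneg[OF a])
  have i: "infsum (\<lambda>k. if k \<in> F then supnorm (a k) else 0) UNIV = infsum (\<lambda>k. supnorm (a k)) F"
    by (rule infsum_cong_neutral) auto
  show "trunc F a \<in> AA" using ell1_bound(1)[OF b c s]
  proof (rule AA_goodI)
    fix n x assume "trunc F a n x \<noteq> 0"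
    then have "a n x \<noteq> 0" by (auto simp: trunc_def split: if_splits)
    then show "x \<in> Fix \<sigma> n" by (rule AA_good[OF assms])
  qed
  show "nrm (trunc F a) \<le> infsum (\<lambda>k. supnorm (a k)) F" using ell1_bound(2)[OF b c s] i by simp
qed

lemma star_in:
  assumes "a \<in> AA" shows "ell_star \<sigma> a \<in> AA"
proof -
  have a: "a \<in> ell1" using assms AA_ell1 by auto
  have b: "ell_star \<sigma> a k \<in> CX" for k
  proof -
    have "(\<lambda>x. cnj (a (-k) (ipow \<sigma> (-k) x))) \<in> CX" by (intro CX_cnj CX_ipow ell1_CX[OF a])
    then show ?thesis by (simp add: ell_star_def)
  qed
  have c: "cmod (ell_star \<sigma> a k x) \<le> supnorm (a (- k))" for k x
    using ell1_pt[OF a, of "-k" "ipow \<sigma> (-k) x"] by (simp add: ell_star_def)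
  have u: "uminus ` (UNIV::int set) = UNIV" by (rule surjI[of _ uminus]) simp
  have "(\<lambda>k. supnorm (a k)) summable_on (uminus ` UNIV)" using ell1_summ[OF a] unfolding u .
  then have "((\<lambda>k. supnorm (a k)) \<circ> uminus) summable_on UNIV"
    by (rule summable_on_reindex[THEN iffD1, rotated]) (simp add: inj_on_def)
  then have s: "(\<lambda>k. supnorm (a (- k))) summable_on UNIV" by (simp add: o_def)
  have g: "x \<in> Fix \<sigma> n" if nz: "ell_star \<sigma> a n x \<noteq> 0" for n x
  proof -
    define y where "y = ipow \<sigma> (- n) x"
    have "a (- n) y \<noteq> 0" using nz by (simp add: ell_star_def y_def)
    then have "y \<in> Fix \<sigma> (- n)" by (rule AA_good[OF assms])
    then have y: "ipow \<sigma> (- n) y = y" by (simp add: Fix_iff)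
    have "x = ipow \<sigma> n y" unfolding y_def by (rule ipow_cancel_neg[symmetric])
    also have "\<dots> = ipow \<sigma> n (ipow \<sigma> (- n) y)" using y by simp
    also have "\<dots> = y" by (rule ipow_cancel_neg)
    finally have "x = y" .
    then have "x \<in> Fix \<sigma> (- n)" using \<open>y \<in> Fix \<sigma> (- n)\<close> by simp
    then show ?thesis by (simp add: Fix_neg_iff)
  qed
  show ?thesis using ell1_bound(1)[OF b c s] g by (rule AA_goodI)
qed

end


lemma prod_summable_real:
  fixes P Q :: "'i \<Rightarrow> real"
  assumes "P summable_on UNIV" "Q summable_on UNIV" "\<And>k. 0 \<le> P k" "\<And>k. 0 \<le> Q k"
  shows "(\<lambda>(k, m). P k * Q m) summable_on UNIV"
proof -
  have "(\<lambda>km. P (fst km) * Q (snd km)) summable_on Sigma UNIV (\<lambda>_. UNIV)"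
  proof (rule summable_on_SigmaI)
    fix x :: 'i
    show "((\<lambda>y. P (fst (x, y)) * Q (snd (x, y))) has_sum (P x * infsum Q UNIV)) UNIV"
      using has_sum_cmult_right[OF has_sum_infsum[OF assms(2)], of "P x"] by simp
  next
    show "(\<lambda>x. P x * infsum Q UNIV) summable_on UNIV" by (rule summable_on_cmult_left[OF assms(1)])
  qed (use assms in auto)
  then show ?thesis by (simp add: case_prod_beta')
qed

lemma cauchy_int:
  fixes \<alpha> \<beta> :: "int \<Rightarrow> 'c::{real_normed_algebra,banach}"
  assumes sa: "(\<lambda>k. norm (\<alpha> k)) summable_on UNIV" and sb: "(\<lambda>k. norm (\<beta> k)) summable_on UNIV"
  shows "(\<lambda>k. \<alpha> k * \<beta> (n - k)) summable_on UNIV"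
    "(\<lambda>n. infsum (\<lambda>k. \<alpha> k * \<beta> (n - k)) UNIV) summable_on UNIV"
    "infsum (\<lambda>n. infsum (\<lambda>k. \<alpha> k * \<beta> (n - k)) UNIV) UNIV = infsum \<alpha> UNIV * infsum \<beta> UNIV"
proof -
  have H: "(\<lambda>(k, m). norm (\<alpha> k) * norm (\<beta> m)) summable_on UNIV"
    by (rule prod_summable_real[OF sa sb]) auto
  have "(\<lambda>km. norm ((\<lambda>(k, m). \<alpha> k * \<beta> m) km)) summable_on UNIV"
    by (rule summable_on_comparison_test[OF H]) (auto simp: norm_mult_ineq)
  then have F: "(\<lambda>(k, m). \<alpha> k * \<beta> m) summable_on UNIV" by (rule abs_summable_summable)
  have eqs: "infsum (\<lambda>(k, m). \<alpha> k * \<beta> m) UNIV = infsum (\<lambda>(n, k). \<alpha> k * \<beta> (n - k)) UNIV"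
    by (rule infsum_reindex_bij_witness[of _ "\<lambda>(n, k). (k, n - k)" "\<lambda>(k, m). (k + m, k)"]) auto
  have "(\<lambda>(k, m). \<alpha> k * \<beta> m) summable_on UNIV \<longleftrightarrow> (\<lambda>(n, k). \<alpha> k * \<beta> (n - k)) summable_on UNIV"
    by (rule summable_on_reindex_bij_witness[of _ "\<lambda>(n, k). (k, n - k)" "\<lambda>(k, m). (k + m, k)"]) auto
  then have G: "(\<lambda>(n, k). \<alpha> k * \<beta> (n - k)) summable_on Sigma UNIV (\<lambda>_. UNIV)" using F by simp
  have inner: "(\<lambda>k. \<alpha> k * \<beta> (n - k)) summable_on UNIV" for n
  proof -
    have B: "norm (\<beta> m) \<le> infsum (\<lambda>k. norm (\<beta> k)) UNIV" for m
      by (rule elem_le_infsum[OF sb]) simp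
    have "(\<lambda>k. norm (\<alpha> k) * infsum (\<lambda>k. norm (\<beta> k)) UNIV) summable_on UNIV"
      by (rule summable_on_cmult_left[OF sa])
    then have "(\<lambda>k. norm (\<alpha> k * \<beta> (n - k))) summable_on UNIV"
    proof (rule summable_on_comparison_test)
      fix k
      have "norm (\<alpha> k * \<beta> (n - k)) \<le> norm (\<alpha> k) * norm (\<beta> (n - k))" by (rule norm_mult_ineq)
      also have "\<dots> \<le> norm (\<alpha> k) * infsum (\<lambda>k. norm (\<beta> k)) UNIV" by (rule mult_left_mono[OF B]) simp
      finally show "norm (\<alpha> k * \<beta> (n - k)) \<le> norm (\<alpha> k) * infsum (\<lambda>k. norm (\<beta> k)) UNIV" .
    qed simp
    then show ?thesis by (rule abs_summable_summable)
  qed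
  show "(\<lambda>k. \<alpha> k * \<beta> (n - k)) summable_on UNIV" by (rule inner)
  show "(\<lambda>n. infsum (\<lambda>k. \<alpha> k * \<beta> (n - k)) UNIV) summable_on UNIV"
    using summable_on_SigmaD[of "\<lambda>(n, k). \<alpha> k * \<beta> (n - k)", OF G] inner by simp
  have "infsum (\<lambda>n. infsum (\<lambda>k. \<alpha> k * \<beta> (n - k)) UNIV) UNIV = infsum (\<lambda>(n, k). \<alpha> k * \<beta> (n - k)) UNIV"
    using infsum_Sigma_banach[of "\<lambda>(n, k). \<alpha> k * \<beta> (n - k)", OF G] by simp
  also have "\<dots> = infsum (\<lambda>(k, m). \<alpha> k * \<beta> m) UNIV" using eqs by simp
  also have "\<dots> = infsum (\<lambda>k. infsum (\<lambda>m. \<alpha> k * \<beta> m) UNIV) UNIV"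
    using infsum_Sigma_banach[of "\<lambda>(k, m). \<alpha> k * \<beta> m" UNIV "\<lambda>_. UNIV"] F by simp
  also have "\<dots> = infsum (\<lambda>k. \<alpha> k * infsum \<beta> UNIV) UNIV"
    using infsum_cmult_right[OF abs_summable_summable[OF sb]] by simp
  also have "\<dots> = infsum \<alpha> UNIV * infsum \<beta> UNIV"
    by (rule infsum_cmult_left[OF abs_summable_summable[OF sa]])
  finally show "infsum (\<lambda>n. infsum (\<lambda>k. \<alpha> k * \<beta> (n - k)) UNIV) UNIV = infsum \<alpha> UNIV * infsum \<beta> UNIV" .
qed

lemma cont_infsum:
  fixes F :: "'i \<Rightarrow> 'b::topological_space \<Rightarrow> complex"
  assumes cF: "\<And>i. continuous_on UNIV (F i)" and bF: "\<And>i x. cmod (F i x) \<le> M i"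
    and sM: "M summable_on UNIV"
  shows "continuous_on UNIV (\<lambda>x. infsum (\<lambda>i. F i x) UNIV)"
proof (rule uniform_limit_theorem)
  show "\<forall>\<^sub>F S in finite_subsets_at_top UNIV. continuous_on UNIV (\<lambda>x. sum (\<lambda>i. F i x) S)"
    by (intro always_eventually allI continuous_on_sum) (auto intro: cF)
  show "\<not> trivial_limit (finite_subsets_at_top (UNIV :: 'i set))" by simp
  show "uniform_limit UNIV (\<lambda>S x. sum (\<lambda>i. F i x) S) (\<lambda>x. infsum (\<lambda>i. F i x) UNIV) (finite_subsets_at_top UNIV)"
    unfolding uniform_limit_iff
  proof (intro allI impI)
    fix e :: real assume e: "e > 0"
    have "(sum M \<longlongrightarrow> infsum M UNIV) (finite_subsets_at_top UNIV)"
      using has_sum_infsum[OF sM] by (simp add: has_sum_def)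
    then have ev: "\<forall>\<^sub>F S in finite_subsets_at_top UNIV. dist (sum M S) (infsum M UNIV) < e"
      using e tendsto_iff by blast
    have M0: "0 \<le> M i" for i using bF[of i undefined] norm_ge_zero[of "F i undefined"] by linarith
    show "\<forall>\<^sub>F S in finite_subsets_at_top UNIV. \<forall>x\<in>UNIV. dist (sum (\<lambda>i. F i x) S) (infsum (\<lambda>i. F i x) UNIV) < e"
    proof -
      have fin: "\<forall>\<^sub>F S in finite_subsets_at_top UNIV. finite S"
        by (rule eventually_finite_subsets_at_top_weakI) simp
      from ev fin show ?thesis
    proof (eventually_elim)
      case (elim S)
      then have S: "finite S" and d: "dist (sum M S) (infsum M UNIV) < e" by auto
      have sMc: "M summable_on (- S)" by (rule summable_on_subset[OF sM]) auto
      have uS: "UNIV = S \<union> (- S)" by auto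
      have Msplit: "infsum M UNIV = sum M S + infsum M (- S)"
        using infsum_Un_disjoint[of M S "- S"] S sMc uS by (simp add: Compl_eq_Diff_UNIV)
      show ?case
      proof
        fix x :: 'b
        have sF: "(\<lambda>i. F i x) summable_on UNIV" using csum_bound(1)[OF sM, where g="\<lambda>i. F i x"] bF by simp
        have sFc: "(\<lambda>i. F i x) summable_on (- S)" by (rule summable_on_subset[OF sF]) auto
        have Fsplit: "infsum (\<lambda>i. F i x) UNIV = sum (\<lambda>i. F i x) S + infsum (\<lambda>i. F i x) (- S)"
          using infsum_Un_disjoint[of "\<lambda>i. F i x" S "- S"] S sFc uS by (simp add: Compl_eq_Diff_UNIV)
        have "cmod (infsum (\<lambda>i. F i x) (- S)) \<le> infsum M (- S)"
          by (rule csum_bound(2)[OF sMc]) (rule bF)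
        moreover have "infsum M (- S) < e" using d Msplit by (simp add: dist_real_def)
        ultimately show "dist (sum (\<lambda>i. F i x) S) (infsum (\<lambda>i. F i x) UNIV) < e"
          using Fsplit by (simp add: dist_norm norm_minus_commute)
      qed
    qed
    qed
  qed
qed

context setting begin

lemma mult_terms:
  fixes a b :: "'a el"
  assumes a: "a \<in> ell1" and b: "b \<in> ell1"
  shows "cmod (a k x * b (n - k) (ipow \<sigma> (- k) x)) \<le> supnorm (a k) * supnorm (b (n - k))"
  using ell1_pt[OF a, of k x] ell1_pt[OF b, of "n - k" "ipow \<sigma> (- k) x"]
  by (simp add: norm_mult mult_mono ell1_sn_nonneg[OF a] ell1_sn_nonneg[OF b])

lemma mult_summ_pt:
  fixes a b :: "'a el"
  assumes a: "a \<in> ell1" and b: "b \<in> ell1"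
  shows "(\<lambda>k. supnorm (a k) * supnorm (b (n - k))) summable_on UNIV"
    "(\<lambda>n. infsum (\<lambda>k. supnorm (a k) * supnorm (b (n - k))) UNIV) summable_on UNIV"
    "infsum (\<lambda>n. infsum (\<lambda>k. supnorm (a k) * supnorm (b (n - k))) UNIV) UNIV = nrm a * nrm b"
proof -
  have sa: "(\<lambda>k. norm (supnorm (a k))) summable_on UNIV" using ell1_summ[OF a] ell1_sn_nonneg[OF a] by simp
  have sb: "(\<lambda>k. norm (supnorm (b k))) summable_on UNIV" using ell1_summ[OF b] ell1_sn_nonneg[OF b] by simp
  note c = cauchy_int[OF sa sb]
  show "(\<lambda>k. supnorm (a k) * supnorm (b (n - k))) summable_on UNIV" by (rule c(1))
  show "(\<lambda>n. infsum (\<lambda>k. supnorm (a k) * supnorm (b (n - k))) UNIV) summable_on UNIV" by (rule c(2))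
  show "infsum (\<lambda>n. infsum (\<lambda>k. supnorm (a k) * supnorm (b (n - k))) UNIV) UNIV = nrm a * nrm b"
    using c(3) by (simp add: nrm_def)
qed

lemma mult_pt_summable:
  fixes a b :: "'a el"
  assumes a: "a \<in> ell1" and b: "b \<in> ell1"
  shows "(\<lambda>k. a k x * b (n - k) (ipow \<sigma> (- k) x)) summable_on UNIV"
    "cmod (ell_mult \<sigma> a b n x) \<le> infsum (\<lambda>k. supnorm (a k) * supnorm (b (n - k))) UNIV"
  using csum_bound[OF mult_summ_pt(1)[OF a b, of n], where g="\<lambda>k. a k x * b (n - k) (ipow \<sigma> (- k) x)"]
    mult_terms[OF a b, of _ x n] by (auto simp: ell_mult_def)

lemma mult_in:
  fixes a b :: "'a el"
  assumes A: "a \<in> AA" and B: "b \<in> AA"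
  shows "ell_mult \<sigma> a b \<in> AA" "nrm (ell_mult \<sigma> a b) \<le> nrm a * nrm b"
proof -
  have a: "a \<in> ell1" and b: "b \<in> ell1" using A B AA_ell1 by auto
  have cont: "ell_mult \<sigma> a b n \<in> CX" for n
  proof -
    have "continuous_on UNIV (\<lambda>x. infsum (\<lambda>k. a k x * b (n - k) (ipow \<sigma> (- k) x)) UNIV)"
    proof (rule cont_infsum[OF _ mult_terms[OF a b] mult_summ_pt(1)[OF a b]])
      fix k
      have "(\<lambda>x. a k x * b (n - k) (ipow \<sigma> (- k) x)) \<in> CX"
        by (intro CX_mult CX_ipow ell1_CX[OF a] ell1_CX[OF b])
      then show "continuous_on UNIV (\<lambda>x. a k x * b (n - k) (ipow \<sigma> (- k) x))" by (simp add: CX_def)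
    qed
    then show ?thesis by (simp add: CX_def ell_mult_def)
  qed
  note bnd = ell1_bound[OF cont mult_pt_summable(2)[OF a b] mult_summ_pt(2)[OF a b]]
  show "nrm (ell_mult \<sigma> a b) \<le> nrm a * nrm b" using bnd(2) mult_summ_pt(3)[OF a b] by simp
  show "ell_mult \<sigma> a b \<in> AA" using bnd(1)
  proof (rule AA_goodI)
    fix n x assume nz: "ell_mult \<sigma> a b n x \<noteq> 0"
    have "\<exists>k. a k x * b (n - k) (ipow \<sigma> (- k) x) \<noteq> 0"
    proof (rule ccontr)
      assume "\<not> ?thesis"
      then have "(\<lambda>k. a k x * b (n - k) (ipow \<sigma> (- k) x)) = (\<lambda>_. 0)" by auto
      then have "ell_mult \<sigma> a b n x = 0" by (simp add: ell_mult_def)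
      then show False using nz by simp
    qed
    then obtain k where k: "a k x \<noteq> 0" "b (n - k) (ipow \<sigma> (- k) x) \<noteq> 0" by auto
    have xk: "x \<in> Fix \<sigma> k" by (rule AA_good[OF A k(1)])
    then have "ipow \<sigma> (- k) x = x" by (rule Fix_neg_apply)
    then have "b (n - k) x \<noteq> 0" using k(2) by simp
    then have "x \<in> Fix \<sigma> (n - k)" by (rule AA_good[OF B])
    from Fix_add[OF xk this] show "x \<in> Fix \<sigma> n" by simp
  qed
qed

end


lemma prod_summable_real2:
  fixes P :: "'i \<Rightarrow> real" and Q :: "'j \<Rightarrow> real"
  assumes "P summable_on UNIV" "Q summable_on UNIV" "\<And>k. 0 \<le> P k" "\<And>k. 0 \<le> Q k"
  shows "(\<lambda>(k, m). P k * Q m) summable_on UNIV"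
proof -
  have "(\<lambda>km. P (fst km) * Q (snd km)) summable_on Sigma UNIV (\<lambda>_. UNIV)"
  proof (rule summable_on_SigmaI)
    fix x :: 'i
    show "((\<lambda>y. P (fst (x, y)) * Q (snd (x, y))) has_sum (P x * infsum Q UNIV)) UNIV"
      using has_sum_cmult_right[OF has_sum_infsum[OF assms(2)], of "P x"] by simp
  next
    show "(\<lambda>x. P x * infsum Q UNIV) summable_on UNIV" by (rule summable_on_cmult_left[OF assms(1)])
  qed (use assms in auto)
  then show ?thesis by (simp add: case_prod_beta')
qed

lemma geom_summable:
  fixes r :: real assumes "0 \<le> r" "r < 1"
  shows "(\<lambda>m::nat. r ^ m) summable_on UNIV"
  by (rule summable_nonneg_imp_summable_on) (use assms in \<open>auto intro!: summable_geometric\<close>)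

lemma infsum_nat_shift:
  fixes f :: "nat \<Rightarrow> complex"
  assumes "f summable_on UNIV"
  shows "infsum (\<lambda>m. f (Suc m)) UNIV = infsum f UNIV - f 0"
proof -
  have u: "UNIV = {0} \<union> Suc ` UNIV" by (auto simp: image_iff) (metis not0_implies_Suc)
  have s: "f summable_on (Suc ` UNIV)" by (rule summable_on_subset[OF assms]) auto
  have "infsum f UNIV = infsum f {0} + infsum f (Suc ` UNIV)"
    by (subst u, rule infsum_Un_disjoint) (use s in auto)
  moreover have "infsum f (Suc ` UNIV) = infsum (\<lambda>m. f (Suc m)) UNIV"
    by (subst infsum_reindex) (auto simp: o_def)
  ultimately show ?thesis by simp
qed

definition one :: "'b el" where "one = emb (\<lambda>_. 1)"

context setting begin

lemma one_in: "one \<in> AA" unfolding one_def by (rule emb_in) simp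

lemma nrm_one: "nrm (one :: 'a el) \<le> 1"
proof -
  have "nrm (sgl 0 (\<lambda>_::'a. 1::complex)) \<le> supnorm (\<lambda>_::'a. 1::complex)" by (rule sgl_in) auto
  moreover have "supnorm (\<lambda>_::'a. 1::complex) \<le> 1" by (rule sn_le) simp
  ultimately have "nrm (sgl 0 (\<lambda>_::'a. 1::complex)) \<le> 1" by linarith
  then show ?thesis by (simp add: one_def emb_sgl)
qed

lemma mult_one: "ell_mult \<sigma> one a = a"
  by (simp add: one_def mult_emb_l)

lemma one_val: "one k x = (if k = 0 then 1 else 0)"
  by (simp add: one_def emb_def)

definition pw :: "'a el \<Rightarrow> nat \<Rightarrow> 'a el" where
  "pw a m = (ell_mult \<sigma> a ^^ m) one"

lemma pw_0: "pw a 0 = one" by (simp add: pw_def)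
lemma pw_Suc: "pw a (Suc m) = ell_mult \<sigma> a (pw a m)" by (simp add: pw_def)

lemma pw_in: "a \<in> AA \<Longrightarrow> pw a m \<in> AA \<and> nrm (pw a m) \<le> nrm a ^ m"
proof (induction m)
  case 0 then show ?case using one_in nrm_one by (simp add: pw_0)
next
  case (Suc m)
  then have i: "pw a m \<in> AA" "nrm (pw a m) \<le> nrm a ^ m" by auto
  note mi = mult_in[OF Suc.prems i(1)]
  have "nrm a * nrm (pw a m) \<le> nrm a * nrm a ^ m"
    by (rule mult_left_mono[OF i(2) nrm_nonneg[OF AA_ell1[OF Suc.prems]]])
  then show ?case using mi by (simp add: pw_Suc)
qed

lemma neumann:
  assumes A: "a \<in> AA" and r: "nrm a < 1"
  shows "\<exists>b\<in>AA. ell_mult \<sigma> (ell_add one (ell_smult (-1) a)) b = one"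
proof -
  define r where "r = nrm a"
  have r0: "0 \<le> r" and r1: "r < 1" using nrm_nonneg[OF AA_ell1[OF A]] r by (auto simp: r_def)
  have P: "pw a m \<in> AA" "nrm (pw a m) \<le> r ^ m" for m using pw_in[OF A] by (auto simp: r_def)
  have Pell: "pw a m \<in> ell1" for m using P(1) AA_ell1 by auto
  have Psn: "supnorm (pw a m n) \<le> r ^ m" for m n using nrm_ge[OF Pell, of m n] P(2)[of m] by linarith
  have Ppt: "cmod (pw a m n x) \<le> r ^ m" for m n x using ell1_pt[OF Pell, of m n x] Psn[of m n] by linarith
  have G: "(\<lambda>m::nat. r ^ m) summable_on UNIV" by (rule geom_summable[OF r0 r1])
  define b where "b = (\<lambda>n x. infsum (\<lambda>m. pw a m n x) UNIV)"
  have bsum: "(\<lambda>m. pw a m n x) summable_on UNIV" for n x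
    using csum_bound(1)[OF G, where g="\<lambda>m. pw a m n x"] Ppt by simp
  have bCX: "b n \<in> CX" for n
  proof -
    have "continuous_on UNIV (\<lambda>x. infsum (\<lambda>m. pw a m n x) UNIV)"
      by (rule cont_infsum[OF _ Ppt G]) (use ell1_CX[OF Pell] in \<open>simp add: CX_def\<close>)
    then show ?thesis by (simp add: CX_def b_def)
  qed
  define W where "W = (\<lambda>(m::nat, n::int). supnorm (pw a m n))"
  have Wn: "0 \<le> W (m, n)" for m n using ell1_sn_nonneg[OF Pell] by (simp add: W_def)
  have WS: "W summable_on Sigma UNIV (\<lambda>_. UNIV)"
  proof (rule summable_on_SigmaI)
    fix m :: nat
    show "((\<lambda>n. W (m, n)) has_sum nrm (pw a m)) UNIV"
      using has_sum_infsum[OF ell1_summ[OF Pell, of m]] by (simp add: W_def nrm_def)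
  next
    show "(\<lambda>m. nrm (pw a m)) summable_on UNIV"
      by (rule summable_on_comparison_test[OF G]) (use P(2) nrm_nonneg[OF Pell] in auto)
  qed (use Wn in auto)
  then have "W summable_on UNIV \<times> UNIV" by simp
  then have WS': "(\<lambda>(n, m). W (m, n)) summable_on Sigma UNIV (\<lambda>_. UNIV)"
    by (subst (asm) summable_on_swap) simp
  have Win: "(\<lambda>m. W (m, n)) summable_on UNIV" for n
    by (rule summable_on_comparison_test[OF G]) (use Psn Wn in \<open>auto simp: W_def\<close>)
  have sS: "(\<lambda>n. infsum (\<lambda>m. W (m, n)) UNIV) summable_on UNIV"
    using summable_on_SigmaD[OF WS'] Win by simp
  have bb: "cmod (b n x) \<le> infsum (\<lambda>m. W (m, n)) UNIV" for n x
    using csum_bound(2)[OF Win, where g="\<lambda>m. pw a m n x"] ell1_pt[OF Pell] by (simp add: b_def W_def)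
  have bell: "b \<in> ell1" by (rule ell1_bound(1)[OF bCX bb sS])
  have bAA: "b \<in> AA" using bell
  proof (rule AA_goodI)
    fix n x assume nz: "b n x \<noteq> 0"
    have "\<exists>m. pw a m n x \<noteq> 0"
    proof (rule ccontr)
      assume "\<not> ?thesis"
      then have "(\<lambda>m. pw a m n x) = (\<lambda>_. 0)" by auto
      then have "b n x = 0" by (simp add: b_def)
      then show False using nz by simp
    qed
    then obtain m where "pw a m n x \<noteq> 0" by auto
    then show "x \<in> Fix \<sigma> n" by (rule AA_good[OF P(1)])
  qed
  have ab: "ell_mult \<sigma> a b n x = b n x - one n x" for n x
  proof -
    define y where "y = (\<lambda>k. ipow \<sigma> (- k) x)"
    have aell: "a \<in> ell1" using A AA_ell1 by auto
    have H: "(\<lambda>(k, m). supnorm (a k) * r ^ m) summable_on UNIV"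
      by (rule prod_summable_real2[OF ell1_summ[OF aell] G]) (use ell1_sn_nonneg[OF aell] r0 in auto)
    have "(\<lambda>km. norm ((\<lambda>(k, m). a k x * pw a m (n - k) (y k)) km)) summable_on UNIV"
    proof (rule summable_on_comparison_test[OF H])
      fix km :: "int \<times> nat"
      obtain k m where km: "km = (k, m)" by (cases km)
      have "cmod (a k x * pw a m (n - k) (y k)) \<le> supnorm (a k) * r ^ m"
        unfolding norm_mult by (rule mult_mono[OF ell1_pt[OF aell] Ppt]) (auto simp: ell1_sn_nonneg[OF aell])
      then show "norm ((\<lambda>(k, m). a k x * pw a m (n - k) (y k)) km) \<le> (\<lambda>(k, m). supnorm (a k) * r ^ m) km"
        by (simp add: km)
    qed simp
    then have F: "(\<lambda>(k, m). a k x * pw a m (n - k) (y k)) summable_on UNIV \<times> UNIV"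
      by (simp add: abs_summable_summable)
    have "ell_mult \<sigma> a b n x = infsum (\<lambda>k. a k x * infsum (\<lambda>m. pw a m (n - k) (y k)) UNIV) UNIV"
      by (simp add: ell_mult_def b_def y_def)
    also have "\<dots> = infsum (\<lambda>k. infsum (\<lambda>m. a k x * pw a m (n - k) (y k)) UNIV) UNIV"
      by (rule infsum_cong) (rule infsum_cmult_right[OF bsum, symmetric])
    also have "\<dots> = infsum (\<lambda>m. infsum (\<lambda>k. a k x * pw a m (n - k) (y k)) UNIV) UNIV"
      by (rule infsum_swap_banach[OF F])
    also have "\<dots> = infsum (\<lambda>m. pw a (Suc m) n x) UNIV"
      by (simp add: pw_Suc ell_mult_def y_def)
    also have "\<dots> = infsum (\<lambda>m. pw a m n x) UNIV - pw a 0 n x"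
      by (rule infsum_nat_shift[OF bsum])
    finally show ?thesis by (simp add: b_def pw_0)
  qed
  have "ell_mult \<sigma> (ell_add one (ell_smult (-1) a)) b n x = one n x" for n x
  proof -
    have aell: "a \<in> ell1" using A AA_ell1 by auto
    have s1: "(\<lambda>k. one k x * b (n - k) (ipow \<sigma> (- k) x)) summable_on UNIV"
      by (rule summable_pt[where n=0]) (simp add: one_val)
    have s2: "(\<lambda>k. - (a k x * b (n - k) (ipow \<sigma> (- k) x))) summable_on UNIV"
      by (rule summable_on_uminus[THEN iffD2]) (rule mult_pt_summable(1)[OF aell bell])
    have "ell_mult \<sigma> (ell_add one (ell_smult (-1) a)) b n x =
      infsum (\<lambda>k. one k x * b (n - k) (ipow \<sigma> (- k) x) + - (a k x * b (n - k) (ipow \<sigma> (- k) x))) UNIV"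
      by (simp add: ell_mult_def ell_add_def ell_smult_def algebra_simps)
    also have "\<dots> = infsum (\<lambda>k. one k x * b (n - k) (ipow \<sigma> (- k) x)) UNIV
        + infsum (\<lambda>k. - (a k x * b (n - k) (ipow \<sigma> (- k) x))) UNIV"
      by (rule infsum_add[OF s1 s2])
    also have "infsum (\<lambda>k. one k x * b (n - k) (ipow \<sigma> (- k) x)) UNIV = b n x"
      by (subst infsum_pt[where n=0]) (auto simp: one_val)
    also have "infsum (\<lambda>k. - (a k x * b (n - k) (ipow \<sigma> (- k) x))) UNIV = - ell_mult \<sigma> a b n x"
      by (simp add: infsum_uminus ell_mult_def)
    finally show ?thesis using ab[of n x] by simp
  qed
  then show ?thesis using bAA by blast
qed

subsection \<open>Characters\<close>

lemma DA: "\<omega> \<in> DeltaA \<sigma> \<longleftrightarrow> \<omega> \<in> extensional AA \<and> is_character AA ell_add (ell_mult \<sigma>) ell_smult \<omega>"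
  by (simp add: DeltaA_def char_space_def)

lemma ch_add: "\<omega> \<in> DeltaA \<sigma> \<Longrightarrow> a \<in> AA \<Longrightarrow> b \<in> AA \<Longrightarrow> \<omega> (ell_add a b) = \<omega> a + \<omega> b"
  by (simp add: DA is_character_def)
lemma ch_smult: "\<omega> \<in> DeltaA \<sigma> \<Longrightarrow> a \<in> AA \<Longrightarrow> \<omega> (ell_smult c a) = c * \<omega> a"
  by (simp add: DA is_character_def)
lemma ch_mult: "\<omega> \<in> DeltaA \<sigma> \<Longrightarrow> a \<in> AA \<Longrightarrow> b \<in> AA \<Longrightarrow> \<omega> (ell_mult \<sigma> a b) = \<omega> a * \<omega> b"
  by (simp add: DA is_character_def)

lemma ch_one: assumes "\<omega> \<in> DeltaA \<sigma>" shows "\<omega> one = 1"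
proof -
  obtain a where a: "a \<in> AA" "\<omega> a \<noteq> 0" using assms by (auto simp: DA is_character_def)
  have "\<omega> a = \<omega> (ell_mult \<sigma> one a)" by (simp add: mult_one)
  also have "\<dots> = \<omega> one * \<omega> a" by (rule ch_mult[OF assms one_in a(1)])
  finally show ?thesis using a(2) by simp
qed

lemma ch_bound:
  assumes W: "\<omega> \<in> DeltaA \<sigma>" and A: "a \<in> AA"
  shows "cmod (\<omega> a) \<le> nrm a"
proof (rule ccontr)
  assume "\<not> ?thesis"
  then have gt: "cmod (\<omega> a) > nrm a" by simp
  then have nz: "\<omega> a \<noteq> 0" using nrm_nonneg[OF AA_ell1[OF A]] by auto
  define c where "c = 1 / \<omega> a"
  define a' where "a' = ell_smult c a"
  have a'in: "a' \<in> AA" using smult_in(1)[OF A] by (simp add: a'_def)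
  have "nrm a' \<le> cmod c * nrm a" using smult_in(2)[OF A] by (simp add: a'_def)
  also have "\<dots> < 1" using gt nz by (simp add: c_def norm_divide field_simps)
  finally have "nrm a' < 1" .
  then obtain b where b: "b \<in> AA" "ell_mult \<sigma> (ell_add one (ell_smult (-1) a')) b = one"
    using neumann[OF a'in] by blast
  have "\<omega> a' = 1" using ch_smult[OF W A, of c] nz by (simp add: a'_def c_def)
  have e: "ell_add one (ell_smult (-1) a') \<in> AA" by (intro add_in one_in smult_in a'in)
  have "\<omega> (ell_add one (ell_smult (-1) a')) = \<omega> one + (-1) * \<omega> a'"
    using ch_add[OF W one_in smult_in(1)[OF a'in]] ch_smult[OF W a'in] by simp
  then have z: "\<omega> (ell_add one (ell_smult (-1) a')) = 0" using \<open>\<omega> a' = 1\<close> ch_one[OF W] by simp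
  have "\<omega> one = \<omega> (ell_add one (ell_smult (-1) a')) * \<omega> b" using ch_mult[OF W e b(1)] b(2) by simp
  then show False using z ch_one[OF W] by simp
qed

end


context setting begin

abbreviation "cad \<equiv> (\<lambda>(f::'a fn) g x. f x + g x)"
abbreviation "cmu \<equiv> (\<lambda>(f::'a fn) g x. f x * g x)"
abbreviation "csm \<equiv> (\<lambda>c (f::'a fn) x. c * f x)"

lemma DC: "\<phi> \<in> (DeltaCX :: ('a fn \<Rightarrow> complex) set) \<longleftrightarrow> \<phi> \<in> extensional CX \<and> is_character CX cad cmu csm \<phi>"
  by (simp add: DeltaCX_def char_space_def)

lemma ev_in: "restrict (\<lambda>f. f x) CX \<in> (DeltaCX :: ('a fn \<Rightarrow> complex) set)"
  unfolding DC is_character_def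
  by (auto simp: CX_add CX_mult CX_cmult intro!: bexI[of _ "\<lambda>_. 1"])

lemma ev_inj:
  assumes "restrict (\<lambda>f. f x) CX = restrict (\<lambda>(f::'a fn). f y) CX" shows "x = y"
proof (rule ccontr)
  assume "x \<noteq> y"
  then obtain f :: "'a fn" where f: "continuous_on UNIV f" "f x = 0" "f y = 1" using sep_points by blast
  then have "f \<in> CX" by (simp add: CX_def)
  then have "restrict (\<lambda>f. f x) CX f = restrict (\<lambda>(f::'a fn). f y) CX f" using assms by simp
  then show False using f \<open>f \<in> CX\<close> by simp
qed

lemma ev_all:
  assumes P: "\<phi> \<in> (DeltaCX :: ('a fn \<Rightarrow> complex) set)"
  shows "\<exists>x. \<phi> = restrict (\<lambda>f. f x) CX"
proof -
  have ext: "\<phi> \<in> extensional CX" and ch: "is_character CX cad cmu csm \<phi>" using P by (auto simp: DC)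
  have add: "\<phi> (\<lambda>x. f x + g x) = \<phi> f + \<phi> g" if "f \<in> CX" "g \<in> CX" for f g
    using ch that by (simp add: is_character_def)
  have mul: "\<phi> (\<lambda>x. f x * g x) = \<phi> f * \<phi> g" if "f \<in> CX" "g \<in> CX" for f g
    using ch that by (simp add: is_character_def)
  have sm: "\<phi> (\<lambda>x. c * f x) = c * \<phi> f" if "f \<in> CX" for f c
    using ch that by (simp add: is_character_def)
  obtain f0 where f0: "f0 \<in> CX" "\<phi> f0 \<noteq> 0" using ch by (auto simp: is_character_def)
  have "\<phi> f0 = \<phi> (\<lambda>x. 1 * f0 x)" by simp
  also have "\<dots> = \<phi> (\<lambda>_. 1) * \<phi> f0" using mul[of "\<lambda>_. 1" f0] f0 by simp
  finally have one: "\<phi> (\<lambda>_. 1) = 1" using f0(2) by simp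
  have zero: "\<phi> (\<lambda>_. 0) = 0" using sm[of "\<lambda>_. 1" 0] by simp
  have "\<exists>x. \<forall>f\<in>CX. \<phi> f = 0 \<longrightarrow> f x = 0"
  proof (rule ccontr)
    assume "\<not> ?thesis"
    then have cov: "\<forall>x. \<exists>f\<in>CX. \<phi> f = 0 \<and> f x \<noteq> 0" by auto
    define C where "C = {f \<in> CX. \<phi> f = 0}"
    have "UNIV \<subseteq> (\<Union>f\<in>C. {x. f x \<noteq> 0})" using cov by (auto simp: C_def)
    moreover have "open {x. f x \<noteq> 0}" if "f \<in> C" for f
      using that open_Collect_neq[of f "\<lambda>_. 0"] by (auto simp: C_def CX_def)
    ultimately obtain C' where C': "C' \<subseteq> C" "finite C'" "UNIV \<subseteq> (\<Union>f\<in>C'. {x. f x \<noteq> 0})"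
      using compactE_image[OF cpt, of C "\<lambda>f. {x. f x \<noteq> 0}"] by blast
    define gs :: "'a fn set \<Rightarrow> 'a fn" where "gs = (\<lambda>F x. \<Sum>f\<in>F. f x * cnj (f x))"
    have gsF: "gs F \<in> CX \<and> \<phi> (gs F) = 0" if "finite F" "F \<subseteq> C" for F
      using that
    proof (induction F rule: finite_induct)
      case empty then show ?case using zero by (simp add: gs_def)
    next
      case (insert f F)
      then have f: "f \<in> CX" "\<phi> f = 0" and IH: "gs F \<in> CX" "\<phi> (gs F) = 0" by (auto simp: C_def)
      have e: "gs (insert f F) = (\<lambda>x. (\<lambda>x. f x * cnj (f x)) x + gs F x)"
        using insert(1,2) by (simp add: gs_def)
      have c1: "(\<lambda>x. f x * cnj (f x)) \<in> CX" using f(1) by (intro CX_mult CX_cnj)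
      have "\<phi> (\<lambda>x. f x * cnj (f x)) = \<phi> f * \<phi> (\<lambda>x. cnj (f x))" by (rule mul[OF f(1) CX_cnj[OF f(1)]])
      then have "\<phi> (\<lambda>x. f x * cnj (f x)) = 0" using f(2) by simp
      then show ?case using e add[OF c1 IH(1)] IH CX_add[OF c1 IH(1)] by simp
    qed
    define g where "g = gs C'"
    have g: "g \<in> CX" "\<phi> g = 0" using gsF[OF C'(2,1)] by (auto simp: g_def)
    have gpos: "g x \<noteq> 0" for x
    proof -
      obtain f where f: "f \<in> C'" "f x \<noteq> 0" using C'(3) by blast
      have "Re (g x) = (\<Sum>h\<in>C'. (cmod (h x))\<^sup>2)"
        by (simp add: g_def gs_def Re_sum complex_mult_cnj cmod_power2)
      also have "\<dots> \<ge> (cmod (f x))\<^sup>2" by (rule member_le_sum) (use f C'(2) in auto)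
      finally have "Re (g x) > 0" using f(2) by (smt (verit) zero_less_power2 norm_eq_zero)
      then show ?thesis by auto
    qed
    define h where "h = (\<lambda>x. 1 / g x)"
    have "continuous_on UNIV g" using g(1) by (simp add: CX_def)
    then have "continuous_on UNIV (\<lambda>x. 1 / g x)" using gpos by (intro continuous_on_divide continuous_on_const) auto
    then have h: "h \<in> CX" unfolding h_def CX_def by simp
    have "(\<lambda>x. g x * h x) = (\<lambda>_. 1)" using gpos by (auto simp: h_def)
    then have "\<phi> (\<lambda>_. 1) = \<phi> g * \<phi> h" using mul[OF g(1) h] by simp
    then show False using one g(2) by simp
  qed
  then obtain x where x: "\<And>f. f \<in> CX \<Longrightarrow> \<phi> f = 0 \<Longrightarrow> f x = 0" by blast
  have "\<phi> f = f x" if f: "f \<in> CX" for f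
  proof -
    have c: "(\<lambda>y. - \<phi> f * 1) \<in> CX" by simp
    have "\<phi> (\<lambda>y. f y + (\<lambda>y. - \<phi> f * 1) y) = \<phi> f + \<phi> (\<lambda>y. - \<phi> f * 1)" by (rule add[OF f c])
    also have "\<phi> (\<lambda>y. - \<phi> f * 1) = - \<phi> f * \<phi> (\<lambda>_. 1)" using sm[of "\<lambda>_. 1" "- \<phi> f"] by simp
    finally have "\<phi> (\<lambda>y. f y + - \<phi> f * 1) = 0" using one by simp
    then have "f x + - \<phi> f * 1 = 0" using x[of "\<lambda>y. f y + - \<phi> f * 1"] CX_add[OF f c] by simp
    then show ?thesis by simp
  qed
  then have "\<phi> = restrict (\<lambda>f. f x) CX" using ext by (auto simp: extensional_def)
  then show ?thesis by blast
qed

lemma emb_add: "emb (\<lambda>x. f x + g x) = ell_add (emb f) (emb g)"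
  by (auto simp: emb_def ell_add_def)
lemma emb_smult: "emb (\<lambda>x. c * f x) = ell_smult c (emb f)"
  by (auto simp: emb_def ell_smult_def)
lemma emb_mult: "emb (\<lambda>x. f x * g x) = ell_mult \<sigma> (emb f) (emb g)"
  unfolding mult_emb_l by (auto simp: emb_def intro!: ext)

lemma restr_in:
  assumes W: "\<omega> \<in> DeltaA \<sigma>"
  shows "restr_char \<omega> \<in> (DeltaCX :: ('a fn \<Rightarrow> complex) set)"
  unfolding DC is_character_def restr_char_def
proof (intro conjI ballI allI)
  show "restrict (\<lambda>f. \<omega> (emb f)) CX \<in> extensional CX" by simp
  fix f g :: "'a fn" assume f: "f \<in> CX" and g: "g \<in> CX"
  show "restrict (\<lambda>f. \<omega> (emb f)) CX (\<lambda>x. f x + g x) = restrict (\<lambda>f. \<omega> (emb f)) CX f + restrict (\<lambda>f. \<omega> (emb f)) CX g"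
    using f g CX_add[OF f g] ch_add[OF W emb_in[OF f] emb_in[OF g]] by (simp add: emb_add)
  show "restrict (\<lambda>f. \<omega> (emb f)) CX (\<lambda>x. f x * g x) = restrict (\<lambda>f. \<omega> (emb f)) CX f * restrict (\<lambda>f. \<omega> (emb f)) CX g"
    using f g CX_mult[OF f g] ch_mult[OF W emb_in[OF f] emb_in[OF g]] by (simp add: emb_mult)
next
  fix c and f :: "'a fn" assume f: "f \<in> CX"
  show "restrict (\<lambda>f. \<omega> (emb f)) CX (\<lambda>x. c * f x) = c * restrict (\<lambda>f. \<omega> (emb f)) CX f"
    using f CX_cmult[OF f] ch_smult[OF W emb_in[OF f]] by (simp add: emb_smult)
next
  show "\<exists>f\<in>CX. restrict (\<lambda>f. \<omega> (emb f)) CX (f :: 'a fn) \<noteq> 0"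
    using ch_one[OF W] by (intro bexI[of _ "\<lambda>_. 1"]) (auto simp: one_def)
qed

lemma char_point:
  assumes W: "\<omega> \<in> DeltaA \<sigma>"
  shows "\<exists>x. \<forall>f\<in>CX. \<omega> (emb f) = f x"
proof -
  obtain x where "restr_char \<omega> = restrict (\<lambda>f. f x) CX" using ev_all[OF restr_in[OF W]] by blast
  then have "\<forall>f\<in>CX. \<omega> (emb f) = f x" unfolding restr_char_def by (metis restrict_apply')
  then show ?thesis by blast
qed

end


lemma range_mult_inj: "(N::int) \<noteq> 0 \<Longrightarrow> inj (\<lambda>j. j * N)"
  by (auto simp: inj_on_def)

lemma mult_reindex_summ:
  fixes M :: "int \<Rightarrow> 'b::{complete_uniform_space, uniform_topological_group_add, ab_group_add, topological_comm_monoid_add}"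
  assumes "M summable_on UNIV" "N \<noteq> 0"
  shows "(\<lambda>j. M (j * N)) summable_on UNIV"
proof -
  have "M summable_on range (\<lambda>j. j * N)" by (rule summable_on_subset[OF assms(1)]) auto
  then show ?thesis by (subst (asm) summable_on_reindex[OF range_mult_inj[OF assms(2)]]) (simp add: o_def)
qed

lemma infsum_mult_reindex:
  fixes g :: "int \<Rightarrow> complex"
  assumes "\<And>k. g k \<noteq> 0 \<Longrightarrow> N dvd k" "N \<noteq> 0"
  shows "infsum g UNIV = infsum (\<lambda>j. g (j * N)) UNIV"
proof -
  have "infsum g UNIV = infsum g (range (\<lambda>j. j * N))"
    by (rule infsum_cong_neutral) (use assms(1) in \<open>auto simp: image_iff dvd_def mult.commute\<close>)
  also have "\<dots> = infsum (\<lambda>j. g (j * N)) UNIV"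
    by (subst infsum_reindex[OF range_mult_inj[OF assms(2)]]) (simp add: o_def)
  finally show ?thesis .
qed

context setting begin

lemma open_nz: "f \<in> CX \<Longrightarrow> open {y. (f::'a fn) y \<noteq> 0}"
  using open_Collect_neq[of f "\<lambda>_. 0"] by (simp add: CX_def)

lemma AA_int: assumes "a \<in> AA" "a k x \<noteq> 0" shows "x \<in> interior (Fix \<sigma> k)"
proof -
  have "open {y. a k y \<noteq> 0}" by (rule open_nz[OF ell1_CX[OF AA_ell1[OF assms(1)]]])
  moreover have "{y. a k y \<noteq> 0} \<subseteq> Fix \<sigma> k" using AA_good[OF assms(1)] by auto
  ultimately have "{y. a k y \<noteq> 0} \<subseteq> interior (Fix \<sigma> k)" by (intro interior_maximal)
  then show ?thesis using assms(2) by auto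
qed

lemma Fix_abs: "Fix \<sigma> k = Fix \<sigma> (int (nat \<bar>k\<bar>))"
proof (cases "k \<ge> 0")
  case True then show ?thesis by simp
next
  case False
  then have "int (nat \<bar>k\<bar>) = - k" by simp
  then show ?thesis using Fix_neg_iff by auto
qed

lemma not_PerInt: assumes "x \<notin> PerInt \<sigma>" "k \<noteq> 0" shows "x \<notin> interior (Fix \<sigma> k)"
proof
  assume "x \<in> interior (Fix \<sigma> k)"
  then have "x \<in> interior (Fix \<sigma> (int (nat \<bar>k\<bar>)))" using Fix_abs[of k] by simp
  moreover have "nat \<bar>k\<bar> \<in> {1..}" using assms(2) by auto
  ultimately have "x \<in> PerInt \<sigma>" unfolding PerInt_def by blast
  then show False using assms(1) by simp
qed

lemma minper_props: assumes "x \<in> PerInt \<sigma>"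
  shows "1 \<le> minper \<sigma> x" "x \<in> interior (Fix \<sigma> (int (minper \<sigma> x)))"
    "\<And>q. 1 \<le> q \<Longrightarrow> x \<in> interior (Fix \<sigma> (int q)) \<Longrightarrow> minper \<sigma> x \<le> q"
proof -
  obtain q where q: "1 \<le> q" "x \<in> interior (Fix \<sigma> (int q))" using assms unfolding PerInt_def by auto
  have "1 \<le> minper \<sigma> x \<and> x \<in> interior (Fix \<sigma> (int (minper \<sigma> x)))"
    unfolding minper_def by (rule LeastI[of _ q]) (use q in auto)
  then show "1 \<le> minper \<sigma> x" "x \<in> interior (Fix \<sigma> (int (minper \<sigma> x)))" by auto
  show "\<And>q. 1 \<le> q \<Longrightarrow> x \<in> interior (Fix \<sigma> (int q)) \<Longrightarrow> minper \<sigma> x \<le> q"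
    unfolding minper_def by (rule Least_le) auto
qed

lemma minper_dvd:
  assumes P: "x \<in> PerInt \<sigma>" and k: "x \<in> interior (Fix \<sigma> k)"
  shows "int (minper \<sigma> x) dvd k"
proof -
  define n where "n = minper \<sigma> x"
  note mp = minper_props[OF P, folded n_def]
  define d where "d = gcd k (int n)"
  have dpos: "d > 0" using mp(1) by (simp add: d_def)
  have "Fix \<sigma> k \<inter> Fix \<sigma> (int n) \<subseteq> Fix \<sigma> d" using Fix_gcd by (auto simp: d_def)
  then have "interior (Fix \<sigma> k \<inter> Fix \<sigma> (int n)) \<subseteq> interior (Fix \<sigma> d)" by (rule interior_mono)
  moreover have "x \<in> interior (Fix \<sigma> k \<inter> Fix \<sigma> (int n))" using k mp(2) by (simp add: interior_Int)
  ultimately have "x \<in> interior (Fix \<sigma> (int (nat d)))" using dpos by auto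
  then have "n \<le> nat d" using mp(3)[of "nat d"] dpos by linarith
  moreover have "d dvd int n" by (simp add: d_def)
  then have "d \<le> int n" using mp(1) by (simp add: zdvd_imp_le)
  moreover have "int n \<le> d" using \<open>n \<le> nat d\<close> dpos by (simp add: le_nat_iff)
  ultimately have "d = int n" by linarith
  then show ?thesis by (metis d_def gcd_dvd1 n_def)
qed

lemma PerInt_fix: assumes "x \<in> PerInt \<sigma>" shows "ipow \<sigma> (- (j * int (minper \<sigma> x))) x = x"
proof -
  have "x \<in> Fix \<sigma> (int (minper \<sigma> x))" using minper_props(2)[OF assms] interior_subset by blast
  then have "x \<in> Fix \<sigma> (j * int (minper \<sigma> x))" by (rule Fix_mult)
  then show ?thesis by (rule Fix_neg_apply)
qed

lemma AA_dvd: assumes "x \<in> PerInt \<sigma>" "a \<in> AA" "a k x \<noteq> 0" shows "int (minper \<sigma> x) dvd k"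
  using minper_dvd[OF assms(1) AA_int[OF assms(2,3)]] .

lemma AA_notPer: assumes "x \<notin> PerInt \<sigma>" "a \<in> AA" "k \<noteq> 0" shows "a k x = 0"
  using not_PerInt[OF assms(1,3)] AA_int[OF assms(2)] by blast

subsection \<open>The characters omega_x\<close>

lemma omega_x_ch:
  assumes x: "x \<notin> PerInt \<sigma>" shows "omega_x \<sigma> x \<in> DeltaA \<sigma>"
  unfolding DA is_character_def
proof (intro conjI ballI allI)
  show "omega_x \<sigma> x \<in> extensional AA" by (simp add: omega_x_def)
  fix a b assume a: "a \<in> AA" and b: "b \<in> AA"
  show "omega_x \<sigma> x (ell_add a b) = omega_x \<sigma> x a + omega_x \<sigma> x b"
    using a b add_in[OF a b] by (simp add: omega_x_def ell_add_def)
  have "ell_mult \<sigma> a b 0 x = a 0 x * b (0 - 0) (ipow \<sigma> (- 0) x)"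
    unfolding ell_mult_def by (rule infsum_pt) (simp add: AA_notPer[OF x a])
  then show "omega_x \<sigma> x (ell_mult \<sigma> a b) = omega_x \<sigma> x a * omega_x \<sigma> x b"
    using a b mult_in(1)[OF a b] by (simp add: omega_x_def)
next
  fix c a assume a: "a \<in> AA"
  show "omega_x \<sigma> x (ell_smult c a) = c * omega_x \<sigma> x a"
    using a smult_in(1)[OF a] by (simp add: omega_x_def ell_smult_def)
next
  show "\<exists>a\<in>AA. omega_x \<sigma> x a \<noteq> 0" using one_in by (intro bexI[of _ one]) (auto simp: omega_x_def one_val)
qed

subsection \<open>The characters omega_xc\<close>

lemma ser_summ:
  assumes a: "a \<in> AA" and N: "N \<noteq> 0" and c: "cmod c = 1"
  shows "(\<lambda>j. norm (a (j * N) x * c powi j)) summable_on UNIV"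
    "(\<lambda>j. norm (a (j * N) x)) summable_on UNIV"
proof -
  have aell: "a \<in> ell1" using a AA_ell1 by auto
  have s: "(\<lambda>j. supnorm (a (j * N))) summable_on UNIV" by (rule mult_reindex_summ[OF ell1_summ[OF aell] N])
  show "(\<lambda>j. norm (a (j * N) x)) summable_on UNIV"
    by (rule summable_on_comparison_test[OF s]) (use ell1_pt[OF aell] in auto)
  then show "(\<lambda>j. norm (a (j * N) x * c powi j)) summable_on UNIV"
    using c by (simp add: norm_mult norm_power_int)
qed

lemma omega_xc_ch:
  assumes x: "x \<in> PerInt \<sigma>" and c: "cmod c = 1" shows "omega_xc \<sigma> x c \<in> DeltaA \<sigma>"
proof -
  define N where "N = int (minper \<sigma> x)"
  have N: "N \<noteq> 0" "N \<ge> 1" using minper_props(1)[OF x] by (auto simp: N_def)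
  have c0: "c \<noteq> 0" using c by auto
  have val: "omega_xc \<sigma> x c a = infsum (\<lambda>j. a (j * N) x * c powi j) UNIV" if "a \<in> AA" for a
    using that by (simp add: omega_xc_def N_def)
  have summ: "(\<lambda>j. a (j * N) x * c powi j) summable_on UNIV" if "a \<in> AA" for a
    using ser_summ(1)[OF that N(1) c] by (rule abs_summable_summable)
  show ?thesis unfolding DA is_character_def
  proof (intro conjI ballI allI)
    show "omega_xc \<sigma> x c \<in> extensional AA" by (simp add: omega_xc_def)
    fix a b assume a: "a \<in> AA" and b: "b \<in> AA"
    have "omega_xc \<sigma> x c (ell_add a b) = infsum (\<lambda>j. ell_add a b (j * N) x * c powi j) UNIV"
      by (rule val[OF add_in[OF a b]])
    also have "\<dots> = infsum (\<lambda>j. a (j * N) x * c powi j + b (j * N) x * c powi j) UNIV"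
      by (simp add: ell_add_def algebra_simps)
    also have "\<dots> = infsum (\<lambda>j. a (j * N) x * c powi j) UNIV + infsum (\<lambda>j. b (j * N) x * c powi j) UNIV"
      by (rule infsum_add[OF summ[OF a] summ[OF b]])
    finally show "omega_xc \<sigma> x c (ell_add a b) = omega_xc \<sigma> x c a + omega_xc \<sigma> x c b"
      by (simp add: val[OF a] val[OF b])
    define \<alpha> where "\<alpha> = (\<lambda>i. a (i * N) x * c powi i)"
    define \<beta> where "\<beta> = (\<lambda>i. b (i * N) x * c powi i)"
    have sa: "(\<lambda>k. norm (\<alpha> k)) summable_on UNIV" using ser_summ(1)[OF a N(1) c] by (simp add: \<alpha>_def)
    have sb: "(\<lambda>k. norm (\<beta> k)) summable_on UNIV" using ser_summ(1)[OF b N(1) c] by (simp add: \<beta>_def)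
    have sa': "(\<lambda>k. norm (a (k * N) x)) summable_on UNIV" by (rule ser_summ(2)[OF a N(1) c])
    have sb': "(\<lambda>k. norm (b (k * N) x)) summable_on UNIV" by (rule ser_summ(2)[OF b N(1) c])
    have trm: "ell_mult \<sigma> a b (j * N) x * c powi j = infsum (\<lambda>i. \<alpha> i * \<beta> (j - i)) UNIV" for j
    proof -
      have "ell_mult \<sigma> a b (j * N) x = infsum (\<lambda>k. a k x * b (j * N - k) (ipow \<sigma> (- k) x)) UNIV"
        by (simp add: ell_mult_def)
      also have "\<dots> = infsum (\<lambda>i. a (i * N) x * b (j * N - i * N) (ipow \<sigma> (- (i * N)) x)) UNIV"
        by (rule infsum_mult_reindex[OF _ N(1)]) (use AA_dvd[OF x a] in \<open>auto simp: N_def\<close>)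
      also have "\<dots> = infsum (\<lambda>i. a (i * N) x * b ((j - i) * N) x) UNIV"
        using PerInt_fix[OF x] by (simp add: N_def algebra_simps)
      finally have e: "ell_mult \<sigma> a b (j * N) x * c powi j = infsum (\<lambda>i. a (i * N) x * b ((j - i) * N) x) UNIV * c powi j"
        by simp
      have s: "(\<lambda>i. a (i * N) x * b ((j - i) * N) x) summable_on UNIV"
        using cauchy_int(1)[OF sa' sb', of j] by (simp add: algebra_simps)
      have "infsum (\<lambda>i. a (i * N) x * b ((j - i) * N) x) UNIV * c powi j
          = infsum (\<lambda>i. a (i * N) x * b ((j - i) * N) x * c powi j) UNIV"
        by (rule infsum_cmult_left[OF s, symmetric])
      also have "\<dots> = infsum (\<lambda>i. \<alpha> i * \<beta> (j - i)) UNIV"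
      proof (rule infsum_cong)
        fix i
        have "c powi j = c powi i * c powi (j - i)" using power_int_add[of c i "j - i"] c0 by simp
        then show "a (i * N) x * b ((j - i) * N) x * c powi j = \<alpha> i * \<beta> (j - i)"
          by (simp add: \<alpha>_def \<beta>_def algebra_simps)
      qed
      finally show ?thesis using e by simp
    qed
    have "omega_xc \<sigma> x c (ell_mult \<sigma> a b) = infsum (\<lambda>j. infsum (\<lambda>i. \<alpha> i * \<beta> (j - i)) UNIV) UNIV"
      using val[OF mult_in(1)[OF a b]] trm by simp
    also have "\<dots> = infsum \<alpha> UNIV * infsum \<beta> UNIV" by (rule cauchy_int(3)[OF sa sb])
    finally show "omega_xc \<sigma> x c (ell_mult \<sigma> a b) = omega_xc \<sigma> x c a * omega_xc \<sigma> x c b"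
      by (simp add: val[OF a] val[OF b] \<alpha>_def \<beta>_def)
  next
    fix d a assume a: "a \<in> AA"
    have "omega_xc \<sigma> x c (ell_smult d a) = infsum (\<lambda>j. ell_smult d a (j * N) x * c powi j) UNIV"
      by (rule val[OF smult_in(1)[OF a]])
    also have "\<dots> = infsum (\<lambda>j. d * (a (j * N) x * c powi j)) UNIV"
      by (simp add: ell_smult_def algebra_simps)
    also have "\<dots> = d * infsum (\<lambda>j. a (j * N) x * c powi j) UNIV"
      by (rule infsum_cmult_right[OF summ[OF a]])
    finally show "omega_xc \<sigma> x c (ell_smult d a) = d * omega_xc \<sigma> x c a"
      by (simp add: val[OF a])
  next
    have "omega_xc \<sigma> x c one = infsum (\<lambda>j. one (j * N) x * c powi j) UNIV" by (rule val[OF one_in])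
    also have "\<dots> = one (0 * N) x * c powi 0" by (rule infsum_pt) (use N in \<open>simp add: one_val\<close>)
    finally show "\<exists>a\<in>AA. omega_xc \<sigma> x c a \<noteq> 0" using one_in by (intro bexI[of _ one]) (simp_all add: one_val)
  qed
qed

end


lemma small_zero: fixes z :: complex assumes "\<And>e. e > 0 \<Longrightarrow> cmod z \<le> e" shows "z = 0"
proof (rule ccontr)
  assume "z \<noteq> 0"
  then have "cmod z > 0" by simp
  from assms[of "cmod z / 2"] this show False by simp
qed

context setting begin

lemma sgl_comp_in: "a \<in> AA \<Longrightarrow> sgl k (a k) \<in> AA"
  by (rule sgl_in(1)) (auto intro: ell1_CX[OF AA_ell1] AA_good)

lemma trunc_ins: "k \<notin> F \<Longrightarrow> trunc (insert k F) a = ell_add (sgl k (a k)) (trunc F a)"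
  by (auto simp: trunc_def sgl_def ell_add_def intro!: ext)

lemma ch_zero: assumes W: "\<omega> \<in> DeltaA \<sigma>" shows "\<omega> (\<lambda>k (y::'a). 0) = 0"
proof -
  have "(\<lambda>k (y::'a). 0::complex) = ell_smult 0 one" by (auto simp: ell_smult_def intro!: ext)
  then show ?thesis using ch_smult[OF W one_in, of 0] by simp
qed

lemma decomp:
  assumes W: "\<omega> \<in> DeltaA \<sigma>" and A: "a \<in> AA"
  shows "((\<lambda>k. \<omega> (sgl k (a k))) has_sum \<omega> a) UNIV"
proof -
  have aell: "a \<in> ell1" using A AA_ell1 by auto
  have fin: "sum (\<lambda>k. \<omega> (sgl k (a k))) F = \<omega> (trunc F a)" if "finite F" for F
    using that
  proof (induction F rule: finite_induct)
    case empty
    have "trunc {} a = (\<lambda>k (y::'a). 0)" by (auto simp: trunc_def)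
    then show ?case using ch_zero[OF W] by simp
  next
    case (insert k F)
    then show ?case using ch_add[OF W sgl_comp_in[OF A] trunc_in(1)[OF A]] by (simp add: trunc_ins)
  qed
  define M where "M = (\<lambda>k. supnorm (a k))"
  have sM: "M summable_on UNIV" using ell1_summ[OF aell] by (simp add: M_def)
  show ?thesis unfolding has_sum_def tendsto_iff
  proof (intro allI impI)
    fix e :: real assume e: "e > 0"
    have "(sum M \<longlongrightarrow> infsum M UNIV) (finite_subsets_at_top UNIV)"
      using has_sum_infsum[OF sM] by (simp add: has_sum_def)
    then have ev: "\<forall>\<^sub>F S in finite_subsets_at_top UNIV. dist (sum M S) (infsum M UNIV) < e"
      using e tendsto_iff by blast
    have fins: "\<forall>\<^sub>F S in finite_subsets_at_top UNIV. finite S"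
      by (rule eventually_finite_subsets_at_top_weakI) simp
    from ev fins show "\<forall>\<^sub>F S in finite_subsets_at_top UNIV. dist (sum (\<lambda>k. \<omega> (sgl k (a k))) S) (\<omega> a) < e"
    proof (eventually_elim)
      case (elim S)
      then have S: "finite S" and d: "dist (sum M S) (infsum M UNIV) < e" by auto
      have sMc: "M summable_on (- S)" by (rule summable_on_subset[OF sM]) auto
      have uS: "UNIV = S \<union> (- S)" by auto
      have Msplit: "infsum M UNIV = sum M S + infsum M (- S)"
        using infsum_Un_disjoint[of M S "- S"] S sMc uS by (simp add: Compl_eq_Diff_UNIV)
      have split: "a = ell_add (trunc S a) (trunc (- S) a)" by (auto simp: trunc_def ell_add_def intro!: ext)
      have "\<omega> a = \<omega> (trunc S a) + \<omega> (trunc (- S) a)"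
        using ch_add[OF W trunc_in(1)[OF A] trunc_in(1)[OF A], of S "- S"] split by simp
      then have "\<omega> a - sum (\<lambda>k. \<omega> (sgl k (a k))) S = \<omega> (trunc (- S) a)" using fin[OF S] by simp
      moreover have "cmod (\<omega> (trunc (- S) a)) \<le> infsum M (- S)"
        using ch_bound[OF W trunc_in(1)[OF A, of "- S"]] trunc_in(2)[OF A, of "- S"] by (simp add: M_def)
      moreover have "infsum M (- S) < e" using d Msplit by (simp add: dist_real_def)
      ultimately show ?case by (simp add: dist_norm norm_minus_commute)
    qed
  qed
qed

lemma loc:
  assumes W: "\<omega> \<in> DeltaA \<sigma>" and x: "\<forall>f\<in>CX. \<omega> (emb f) = f x" and g: "g \<in> CX" and B: "b \<in> AA"
  shows "\<omega> (ell_mult \<sigma> (emb g) b) = g x * \<omega> b"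
  using ch_mult[OF W emb_in[OF g] B] x g by simp

lemma emb_sgl_mult: "ell_mult \<sigma> (emb g) (sgl k f) = sgl k (\<lambda>y. g y * f y)"
  by (auto simp: mult_emb_l sgl_def intro!: ext)

lemma van:
  assumes W: "\<omega> \<in> DeltaA \<sigma>" and x: "\<forall>f\<in>CX. \<omega> (emb f) = f x"
    and f: "f \<in> CX" and fs: "\<And>y. f y \<noteq> 0 \<Longrightarrow> y \<in> Fix \<sigma> k" and f0: "f x = 0"
  shows "\<omega> (sgl k f) = 0"
proof (rule small_zero)
  fix e :: real assume e: "e > 0"
  define U where "U = {y. cmod (f y) < e}"
  have "continuous_on UNIV (\<lambda>y. cmod (f y))" using f by (auto simp: CX_def intro: continuous_on_norm)
  then have oU: "open U" unfolding U_def by (rule open_Collect_less) simp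
  have xU: "x \<in> U" using f0 e by (simp add: U_def)
  have "closed (- U)" "closed {x}" "(- U) \<inter> {x} = {}" using oU xU by auto
  from cury[OF this] obtain g :: "'a fn" where g: "continuous_on UNIV g" "\<forall>y. cmod (g y) \<le> 1"
    "\<forall>y\<in>- U. g y = 0" "\<forall>y\<in>{x}. g y = 1" by blast
  have gCX: "g \<in> CX" using g(1) by (simp add: CX_def)
  have gf: "(\<lambda>y. g y * f y) \<in> CX" by (rule CX_mult[OF gCX f])
  have gfs: "\<And>y. g y * f y \<noteq> 0 \<Longrightarrow> y \<in> Fix \<sigma> k" using fs by simp
  have sf: "sgl k f \<in> AA" by (rule sgl_in(1)[OF f fs])
  have "\<omega> (sgl k f) = g x * \<omega> (sgl k f)" using g(4) by simp
  also have "\<dots> = \<omega> (ell_mult \<sigma> (emb g) (sgl k f))" by (rule loc[OF W x gCX sf, symmetric])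
  also have "\<dots> = \<omega> (sgl k (\<lambda>y. g y * f y))" by (simp add: emb_sgl_mult)
  finally have eq: "\<omega> (sgl k f) = \<omega> (sgl k (\<lambda>y. g y * f y))" .
  have bnd: "cmod (g y * f y) \<le> e" for y
  proof (cases "y \<in> U")
    case True
    then have "cmod (f y) < e" by (simp add: U_def)
    moreover have "cmod (g y) \<le> 1" using g(2) by simp
    ultimately have "cmod (g y) * cmod (f y) \<le> 1 * e"
      by (intro mult_mono) auto
    then show ?thesis by (simp add: norm_mult)
  next
    case False then show ?thesis using g(3) e by simp
  qed
  have "cmod (\<omega> (sgl k (\<lambda>y. g y * f y))) \<le> nrm (sgl k (\<lambda>y. g y * f y))"
    by (rule ch_bound[OF W sgl_in(1)[OF gf gfs]])
  also have "\<dots> \<le> supnorm (\<lambda>y. g y * f y)" by (rule sgl_in(2)[OF gf gfs])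
  also have "\<dots> \<le> e" by (rule sn_le[OF bnd])
  finally show "cmod (\<omega> (sgl k f)) \<le> e" using eq by simp
qed

lemma classify_notPer:
  assumes W: "\<omega> \<in> DeltaA \<sigma>" and x: "\<forall>f\<in>CX. \<omega> (emb f) = f x" and nP: "x \<notin> PerInt \<sigma>"
  shows "\<omega> = omega_x \<sigma> x"
proof (rule extensionalityI)
  show "\<omega> \<in> extensional AA" using W by (simp add: DA)
  show "omega_x \<sigma> x \<in> extensional AA" by (simp add: omega_x_def)
  fix a assume A: "a \<in> AA"
  have t: "\<omega> (sgl k (a k)) = (if k = 0 then a 0 x else 0)" for k
  proof (cases "k = 0")
    case True
    then show ?thesis using x ell1_CX[OF AA_ell1[OF A], of 0] by (simp add: emb_sgl[symmetric])
  next
    case False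
    have "\<omega> (sgl k (a k)) = 0"
      by (rule van[OF W x ell1_CX[OF AA_ell1[OF A]]]) (use AA_good[OF A] AA_notPer[OF nP A False] in auto)
    then show ?thesis using False by simp
  qed
  have "((\<lambda>k::int. if k = 0 then a 0 x else 0) has_sum \<omega> a) UNIV" using decomp[OF W A] t by simp
  moreover have "((\<lambda>k::int. if k = 0 then a 0 x else 0) has_sum a 0 x) UNIV"
  proof -
    have "((\<lambda>k::int. if k = 0 then a 0 x else 0) has_sum a 0 x) {0}" by (rule has_sum_finiteI) simp_all
    then show ?thesis by (rule has_sum_cong_neutral[THEN iffD1, rotated -1]) auto
  qed
  ultimately have "\<omega> a = a 0 x" by (rule has_sum_unique)
  then show "\<omega> a = omega_x \<sigma> x a" using A by (simp add: omega_x_def)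
qed

end


context setting begin

lemma bump:
  assumes xP: "x \<in> PerInt \<sigma>"
  shows "\<exists>u W. u \<in> CX \<and> open W \<and> x \<in> W \<and> (\<forall>y\<in>W. u y = 1) \<and> (\<forall>y. cmod (u y) \<le> 1)
     \<and> (\<forall>y. u y \<noteq> 0 \<longrightarrow> y \<in> Fix \<sigma> (int (minper \<sigma> x)))"
proof -
  define N where "N = int (minper \<sigma> x)"
  have xi: "x \<in> interior (Fix \<sigma> N)" using minper_props(2)[OF xP] by (simp add: N_def)
  have "closed (- interior (Fix \<sigma> N))" "closed {x}" "(- interior (Fix \<sigma> N)) \<inter> {x} = {}" using xi by auto
  from ury[OF this] obtain g :: "'a \<Rightarrow> real" where g: "continuous_on UNIV g" "\<forall>y. 0 \<le> g y \<and> g y \<le> 1"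
    "\<forall>y\<in>- interior (Fix \<sigma> N). g y = 0" "\<forall>y\<in>{x}. g y = 1" by blast
  define W where "W = {y. 1/2 < g y}"
  have oW: "open W" unfolding W_def by (rule open_Collect_less) (use g(1) in auto)
  define u where "u = (\<lambda>y. complex_of_real (min 1 (2 * g y)))"
  have "continuous_on UNIV (\<lambda>y. min 1 (2 * g y))" using g(1) by (intro continuous_intros)
  then have "continuous_on UNIV u" unfolding u_def by (rule continuous_on_of_real)
  then have uC: "u \<in> CX" by (simp add: CX_def)
  have uW: "\<forall>y\<in>W. u y = 1" by (auto simp: W_def u_def)
  have ub: "\<forall>y. cmod (u y) \<le> 1" using g(2) by (auto simp: u_def)
  have us: "\<forall>y. u y \<noteq> 0 \<longrightarrow> y \<in> Fix \<sigma> N"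
  proof (intro allI impI)
    fix y assume "u y \<noteq> 0"
    then have "g y \<noteq> 0" by (auto simp: u_def)
    then have "y \<in> interior (Fix \<sigma> N)" using g(3) by blast
    then show "y \<in> Fix \<sigma> N" using interior_subset by blast
  qed
  have "x \<in> W" using g(4) by (simp add: W_def)
  then show ?thesis using uC oW uW ub us by (auto simp: N_def)
qed

lemma classify_Per:
  assumes W: "\<omega> \<in> DeltaA \<sigma>" and x: "\<forall>f\<in>CX. \<omega> (emb f) = f x" and xP: "x \<in> PerInt \<sigma>"
  shows "\<exists>c. cmod c = 1 \<and> \<omega> = omega_xc \<sigma> x c"
proof -
  define N where "N = int (minper \<sigma> x)"
  have N: "N \<noteq> 0" "1 \<le> N" using minper_props(1)[OF xP] by (auto simp: N_def)
  obtain u Wn where u: "u \<in> CX" "open Wn" "x \<in> Wn" "\<forall>y\<in>Wn. u y = 1" "\<forall>y. cmod (u y) \<le> 1"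
     "\<forall>y. u y \<noteq> 0 \<longrightarrow> y \<in> Fix \<sigma> N" using bump[OF xP] unfolding N_def by blast
  have ux: "u x = 1" using u(3,4) by simp
  define e where "e = (\<lambda>j. sgl (j * N) u)"
  have us: "u y \<noteq> 0 \<Longrightarrow> y \<in> Fix \<sigma> (j * N)" for y j using u(6) Fix_mult by blast
  have e_in: "e j \<in> AA" for j unfolding e_def by (rule sgl_in(1)[OF u(1) us])
  have e_n: "cmod (\<omega> (e j)) \<le> 1" for j
  proof -
    have "cmod (\<omega> (e j)) \<le> nrm (e j)" by (rule ch_bound[OF W e_in])
    also have "\<dots> \<le> supnorm u" unfolding e_def by (rule sgl_in(2)[OF u(1) us])
    also have "\<dots> \<le> 1" by (rule sn_le) (use u(5) in auto)
    finally show ?thesis .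
  qed
  have E: "\<omega> (sgl (j * N) f) = f x * \<omega> (e j)" if f: "f \<in> CX" and fs: "\<And>y. f y \<noteq> 0 \<Longrightarrow> y \<in> Fix \<sigma> (j * N)" for f j
  proof -
    have "closed (- Wn)" "closed {x}" "(- Wn) \<inter> {x} = {}" using u(2,3) by auto
    from cury[OF this] obtain g :: "'a fn" where g: "continuous_on UNIV g" "\<forall>y. cmod (g y) \<le> 1"
      "\<forall>y\<in>- Wn. g y = 0" "\<forall>y\<in>{x}. g y = 1" by blast
    have gCX: "g \<in> CX" using g(1) by (simp add: CX_def)
    have gf: "(\<lambda>y. g y * f y) \<in> CX" by (rule CX_mult[OF gCX f])
    have sf: "sgl (j * N) f \<in> AA" by (rule sgl_in(1)[OF f fs])
    have "\<omega> (sgl (j * N) f) = g x * \<omega> (sgl (j * N) f)" using g(4) by simp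
    also have "\<dots> = \<omega> (ell_mult \<sigma> (emb g) (sgl (j * N) f))" by (rule loc[OF W x gCX sf, symmetric])
    also have "\<dots> = \<omega> (sgl (j * N) (\<lambda>y. g y * f y))" by (simp add: emb_sgl_mult)
    also have "sgl (j * N) (\<lambda>y. g y * f y) = ell_mult \<sigma> (emb (\<lambda>y. g y * f y)) (e j)"
    proof -
      have "(\<lambda>y. g y * f y * u y) = (\<lambda>y. g y * f y)"
      proof
        fix y show "g y * f y * u y = g y * f y"
        proof (cases "y \<in> Wn")
          case True then show ?thesis using u(4) by simp
        next
          case False then show ?thesis using g(3) by simp
        qed
      qed
      then show ?thesis by (simp add: e_def emb_sgl_mult)
    qed
    also have "\<omega> (ell_mult \<sigma> (emb (\<lambda>y. g y * f y)) (e j)) = (g x * f x) * \<omega> (e j)"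
      by (rule loc[OF W x gf e_in])
    finally show ?thesis using g(4) by simp
  qed
  have emul: "\<omega> (e i) * \<omega> (e j) = \<omega> (e (i + j))" for i j
  proof -
    define h where "h = (\<lambda>y. u y * u (ipow \<sigma> (- (i * N)) y))"
    have prod: "ell_mult \<sigma> (e i) (e j) = sgl ((i + j) * N) h"
    proof (intro ext)
      fix m y
      have "ell_mult \<sigma> (e i) (e j) m y = e i (i * N) y * e j (m - i * N) (ipow \<sigma> (- (i * N)) y)"
        unfolding ell_mult_def by (rule infsum_pt) (simp add: e_def sgl_def)
      also have "\<dots> = sgl ((i + j) * N) h m y"
        by (auto simp: e_def sgl_def h_def algebra_simps)
      finally show "ell_mult \<sigma> (e i) (e j) m y = sgl ((i + j) * N) h m y" .
    qed
    have hC: "h \<in> CX" unfolding h_def by (intro CX_mult CX_ipow u(1))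
    have hs: "h y \<noteq> 0 \<Longrightarrow> y \<in> Fix \<sigma> ((i + j) * N)" for y using us[of y "i + j"] by (auto simp: h_def)
    have hx: "h x = 1" using ux PerInt_fix[OF xP, of i] by (simp add: h_def N_def)
    have "\<omega> (e i) * \<omega> (e j) = \<omega> (ell_mult \<sigma> (e i) (e j))" by (rule ch_mult[OF W e_in e_in, symmetric])
    also have "\<dots> = h x * \<omega> (e (i + j))" unfolding prod by (rule E[OF hC hs])
    finally show ?thesis using hx by simp
  qed
  have e0: "\<omega> (e 0) = 1" using x u(1) ux by (simp add: e_def emb_sgl[symmetric])
  define c where "c = \<omega> (e 1)"
  have cinv: "c * \<omega> (e (-1)) = 1" using emul[of 1 "-1"] e0 by (simp add: c_def)
  have c1: "cmod c = 1"
  proof -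
    have a1: "cmod c \<le> 1" using e_n by (simp add: c_def)
    have a2: "cmod (\<omega> (e (-1))) \<le> 1" by (rule e_n)
    have "cmod c * cmod (\<omega> (e (-1))) = 1" using cinv by (metis norm_mult norm_one)
    moreover have "cmod c * cmod (\<omega> (e (-1))) \<le> cmod c * 1" by (rule mult_left_mono[OF a2 norm_ge_zero])
    ultimately show ?thesis using a1 by linarith
  qed
  have c0: "c \<noteq> 0" using c1 by auto
  have einv: "\<omega> (e (-1)) = c powi (-1)" using cinv c0 by (simp add: power_int_minus field_simps)
  have epow: "\<omega> (e j) = c powi j" for j
  proof (induction j rule: int_induct[where k=0])
    case base then show ?case using e0 by simp
  next
    case (step1 i)
    have "\<omega> (e (i + 1)) = \<omega> (e i) * \<omega> (e 1)" using emul[of i 1] by simp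
    also have "\<dots> = c powi i * c powi 1" using step1(2) by (simp add: c_def)
    also have "\<dots> = c powi (i + 1)" using power_int_add[of c i 1] c0 by simp
    finally show ?case .
  next
    case (step2 i)
    have "\<omega> (e (i - 1)) = \<omega> (e i) * \<omega> (e (-1))" using emul[of i "-1"] by simp
    also have "\<dots> = c powi i * c powi (-1)" using step2(2) einv by simp
    also have "\<dots> = c powi (i - 1)" using power_int_add[of c i "-1"] c0 by simp
    finally show ?case .
  qed
  have main: "\<omega> a = omega_xc \<sigma> x c a" if A: "a \<in> AA" for a
  proof -
    have aC: "a k \<in> CX" for k by (rule ell1_CX[OF AA_ell1[OF A]])
    have t: "\<omega> (sgl k (a k)) = (if N dvd k then a k x * c powi (k div N) else 0)" for k
    proof (cases "N dvd k")
      case True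
      then obtain j where k: "k = j * N" by (auto simp: dvd_def mult.commute)
      have "\<omega> (sgl (j * N) (a (j * N))) = a (j * N) x * \<omega> (e j)"
        by (rule E[OF aC]) (rule AA_good[OF A])
      then show ?thesis using True k N by (simp add: epow)
    next
      case False
      then have "a k x = 0" using AA_dvd[OF xP A] by (auto simp: N_def)
      then have "\<omega> (sgl k (a k)) = 0" by (intro van[OF W x aC]) (auto intro: AA_good[OF A])
      then show ?thesis using False by simp
    qed
    have "\<omega> a = infsum (\<lambda>k. \<omega> (sgl k (a k))) UNIV" using decomp[OF W A] by (simp add: infsumI)
    also have "\<dots> = infsum (\<lambda>k. if N dvd k then a k x * c powi (k div N) else 0) UNIV" by (simp add: t)
    also have "\<dots> = infsum (\<lambda>j. if N dvd (j * N) then a (j * N) x * c powi ((j * N) div N) else 0) UNIV"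
      by (rule infsum_mult_reindex[OF _ N(1)]) (auto split: if_splits)
    also have "\<dots> = infsum (\<lambda>j. a (j * N) x * c powi j) UNIV" using N by simp
    finally show ?thesis using A by (simp add: omega_xc_def N_def)
  qed
  have "\<omega> = omega_xc \<sigma> x c"
  proof (rule extensionalityI)
    show "\<omega> \<in> extensional AA" using W by (simp add: DA)
    show "omega_xc \<sigma> x c \<in> extensional AA" by (simp add: omega_xc_def)
  qed (rule main)
  then show ?thesis using c1 by blast
qed

end


context setting begin

lemma omx_emb: "f \<in> CX \<Longrightarrow> omega_x \<sigma> x (emb f) = f x"
  using emb_in[of f] by (simp add: omega_x_def emb_def)

lemma omxc_emb:
  assumes xP: "x \<in> PerInt \<sigma>" and f: "f \<in> CX" shows "omega_xc \<sigma> x c (emb f) = f x"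
proof -
  have N: "int (minper \<sigma> x) \<noteq> 0" using minper_props(1)[OF xP] by simp
  have "omega_xc \<sigma> x c (emb f) = infsum (\<lambda>j. emb f (j * int (minper \<sigma> x)) x * c powi j) UNIV"
    using emb_in[OF f] by (simp add: omega_xc_def)
  also have "\<dots> = emb f (0 * int (minper \<sigma> x)) x * c powi 0"
    by (rule infsum_pt) (use N in \<open>simp add: emb_def\<close>)
  finally show ?thesis by (simp add: emb_def)
qed

lemma pts_eq: assumes "\<forall>f\<in>CX. f x = (f::'a fn) y" shows "x = y"
proof (rule ccontr)
  assume "x \<noteq> y"
  then obtain f :: "'a fn" where f: "continuous_on UNIV f" "f x = 0" "f y = 1" using sep_points by blast
  then have "f \<in> CX" by (simp add: CX_def)
  then show False using assms f by auto
qed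

lemma omxc_bump:
  assumes xP: "x \<in> PerInt \<sigma>"
  shows "\<exists>a\<in>AA. \<forall>c. omega_xc \<sigma> x c a = c"
proof -
  define N where "N = int (minper \<sigma> x)"
  have N: "N \<noteq> 0" using minper_props(1)[OF xP] by (simp add: N_def)
  obtain u Wn where u: "u \<in> CX" "open Wn" "x \<in> Wn" "\<forall>y\<in>Wn. u y = 1" "\<forall>y. cmod (u y) \<le> 1"
     "\<forall>y. u y \<noteq> 0 \<longrightarrow> y \<in> Fix \<sigma> N" using bump[OF xP] unfolding N_def by blast
  have ein: "sgl N u \<in> AA" by (rule sgl_in(1)[OF u(1)]) (use u(6) in auto)
  have "omega_xc \<sigma> x c (sgl N u) = c" for c
  proof -
    have "omega_xc \<sigma> x c (sgl N u) = infsum (\<lambda>j. sgl N u (j * N) x * c powi j) UNIV"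
      using ein by (simp add: omega_xc_def N_def)
    also have "\<dots> = sgl N u (1 * N) x * c powi 1"
      by (rule infsum_pt) (use N in \<open>auto simp: sgl_def\<close>)
    finally show ?thesis using u(3,4) by (simp add: sgl_def)
  qed
  then show ?thesis using ein by blast
qed

lemma classify:
  assumes W: "\<omega> \<in> DeltaA \<sigma>"
  shows "(\<exists>x. x \<notin> PerInt \<sigma> \<and> \<omega> = omega_x \<sigma> x) \<or> (\<exists>x c. x \<in> PerInt \<sigma> \<and> cmod c = 1 \<and> \<omega> = omega_xc \<sigma> x c)"
proof -
  obtain x where x: "\<forall>f\<in>CX. \<omega> (emb f) = f x" using char_point[OF W] by blast
  show ?thesis
  proof (cases "x \<in> PerInt \<sigma>")
    case True then show ?thesis using classify_Per[OF W x True] by blast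
  next
    case False then show ?thesis using classify_notPer[OF W x False] by blast
  qed
qed

lemma herm_x:
  assumes A: "a \<in> AA" shows "omega_x \<sigma> x (ell_star \<sigma> a) = cnj (omega_x \<sigma> x a)"
  using A star_in[OF A] by (simp add: omega_x_def ell_star_def)

lemma herm_xc:
  assumes xP: "x \<in> PerInt \<sigma>" and c: "cmod c = 1" and A: "a \<in> AA"
  shows "omega_xc \<sigma> x c (ell_star \<sigma> a) = cnj (omega_xc \<sigma> x c a)"
proof -
  define N where "N = int (minper \<sigma> x)"
  have c0: "c \<noteq> 0" using c by auto
  have cc: "cnj c = c powi (-1)"
  proof -
    have "c * cnj c = complex_of_real ((cmod c)\<^sup>2)" by (rule complex_norm_square[symmetric])
    then have "c * cnj c = 1" using c by simp
    then show ?thesis using c0 by (simp add: power_int_minus field_simps)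
  qed
  have "omega_xc \<sigma> x c (ell_star \<sigma> a) = infsum (\<lambda>j. ell_star \<sigma> a (j * N) x * c powi j) UNIV"
    using star_in[OF A] by (simp add: omega_xc_def N_def)
  also have "\<dots> = infsum (\<lambda>j. cnj (a ((- j) * N) x) * c powi j) UNIV"
    using PerInt_fix[OF xP] by (simp add: ell_star_def N_def)
  also have "\<dots> = infsum (\<lambda>j. cnj (a (j * N) x) * c powi (- j)) UNIV"
    by (rule infsum_reindex_bij_witness[of _ uminus uminus]) auto
  also have "\<dots> = infsum (\<lambda>j. cnj (a (j * N) x * c powi j)) UNIV"
  proof (rule infsum_cong)
    fix j
    have "cnj (c powi j) = c powi (- j)" using cc c0 by (simp add: power_int_minus power_int_inverse)
    then show "cnj (a (j * N) x) * c powi (- j) = cnj (a (j * N) x * c powi j)" by simp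
  qed
  also have "\<dots> = cnj (infsum (\<lambda>j. a (j * N) x * c powi j) UNIV)" by (rule infsum_cnj)
  also have "infsum (\<lambda>j. a (j * N) x * c powi j) UNIV = omega_xc \<sigma> x c a" using A by (simp add: omega_xc_def N_def)
  finally show ?thesis .
qed

lemma restr_val: "f \<in> CX \<Longrightarrow> restr_char \<omega> f = \<omega> (emb f)"
  by (simp add: restr_char_def)

lemma restr_cont:
  "continuous_map (gelfand_top AA (DeltaA \<sigma>)) (gelfand_top CX (DeltaCX :: ('a fn \<Rightarrow> complex) set)) restr_char"
  unfolding gelfand_top_def continuous_map_in_subtopology
proof (intro conjI)
  show "restr_char \<in> topspace (subtopology (product_topology (\<lambda>_. euclidean) AA) (DeltaA \<sigma>)) \<rightarrow> DeltaCX"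
    using restr_in by auto
  show "continuous_map (subtopology (product_topology (\<lambda>_. euclidean) AA) (DeltaA \<sigma>))
      (product_topology (\<lambda>_. euclidean) CX) restr_char"
    unfolding continuous_map_componentwise
  proof (intro conjI ballI)
    show "restr_char ` topspace (subtopology (product_topology (\<lambda>_. euclidean) AA) (DeltaA \<sigma>)) \<subseteq> extensional CX"
      by (auto simp: restr_char_def)
    fix f :: "'a fn" assume f: "f \<in> CX"
    have "continuous_map (subtopology (product_topology (\<lambda>_. euclidean) AA) (DeltaA \<sigma>)) euclidean (\<lambda>\<omega>. \<omega> (emb f))"
      by (rule continuous_map_from_subtopology[OF continuous_map_product_projection[OF emb_in[OF f]]])
    then show "continuous_map (subtopology (product_topology (\<lambda>_. euclidean) AA) (DeltaA \<sigma>)) euclidean (\<lambda>\<omega>. restr_char \<omega> f)"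
      using f by (simp add: restr_val)
  qed
qed

lemma restr_surj: "restr_char ` DeltaA \<sigma> = (DeltaCX :: ('a fn \<Rightarrow> complex) set)"
proof
  show "restr_char ` DeltaA \<sigma> \<subseteq> DeltaCX" using restr_in by auto
  show "DeltaCX \<subseteq> restr_char ` DeltaA \<sigma>"
  proof
    fix \<phi> :: "'a fn \<Rightarrow> complex" assume "\<phi> \<in> DeltaCX"
    then obtain x where x: "\<phi> = restrict (\<lambda>f. f x) CX" using ev_all by blast
    have "\<exists>\<omega>\<in>DeltaA \<sigma>. \<forall>f\<in>CX. \<omega> (emb f) = f x"
    proof (cases "x \<in> PerInt \<sigma>")
      case True then show ?thesis using omega_xc_ch[OF True, of 1] omxc_emb[OF True] by auto
    next
      case False then show ?thesis using omega_x_ch[OF False] omx_emb by auto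
    qed
    then obtain \<omega> where w: "\<omega> \<in> DeltaA \<sigma>" "\<forall>f\<in>CX. \<omega> (emb f) = f x" by blast
    have "restr_char \<omega> = \<phi>" unfolding x restr_char_def using w(2) by (intro restrict_ext) auto
    then show "\<phi> \<in> restr_char ` DeltaA \<sigma>" using w(1) by blast
  qed
qed

end

theorem proposition3p8:
  fixes \<sigma> \<sigma>' :: "'a::t2_space \<Rightarrow> 'a"
  assumes "compact (UNIV :: 'a set)"
    and "homeomorphism UNIV UNIV \<sigma> \<sigma>'"
  shows "(DeltaA \<sigma> = omega_x \<sigma> ` (- PerInt \<sigma>)
                 \<union> (\<lambda>(x, c). omega_xc \<sigma> x c) ` (PerInt \<sigma> \<times> sphere 0 1)) \<and>
    inj_on (omega_x \<sigma>) (- PerInt \<sigma>) \<and>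
    inj_on (\<lambda>(x, c). omega_xc \<sigma> x c) (PerInt \<sigma> \<times> sphere 0 1) \<and>
    omega_x \<sigma> ` (- PerInt \<sigma>) \<inter> (\<lambda>(x, c). omega_xc \<sigma> x c) ` (PerInt \<sigma> \<times> sphere 0 1) = {} \<and>
    (\<forall>\<omega>\<in>DeltaA \<sigma>. \<forall>a\<in>commutant1 \<sigma>. \<omega> (ell_star \<sigma> a) = cnj (\<omega> a)) \<and>
    continuous_map (gelfand_top (commutant1 \<sigma>) (DeltaA \<sigma>)) (gelfand_top CX DeltaCX) restr_char \<and>
    restr_char ` DeltaA \<sigma> = DeltaCX"
proof -
  interpret setting \<sigma> \<sigma>' by unfold_locales (use assms in auto)
  have sph: "c \<in> sphere 0 1 \<longleftrightarrow> cmod c = 1" for c :: complex by simp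
  have P1: "DeltaA \<sigma> = omega_x \<sigma> ` (- PerInt \<sigma>) \<union> (\<lambda>(x, c). omega_xc \<sigma> x c) ` (PerInt \<sigma> \<times> sphere 0 1)"
  proof
    show "DeltaA \<sigma> \<subseteq> omega_x \<sigma> ` (- PerInt \<sigma>) \<union> (\<lambda>(x, c). omega_xc \<sigma> x c) ` (PerInt \<sigma> \<times> sphere 0 1)"
    proof
      fix \<omega> assume W: "\<omega> \<in> DeltaA \<sigma>"
      from classify[OF W] show "\<omega> \<in> omega_x \<sigma> ` (- PerInt \<sigma>) \<union> (\<lambda>(x, c). omega_xc \<sigma> x c) ` (PerInt \<sigma> \<times> sphere 0 1)"
      proof
        assume "\<exists>x. x \<notin> PerInt \<sigma> \<and> \<omega> = omega_x \<sigma> x"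
        then show ?thesis by blast
      next
        assume "\<exists>x c. x \<in> PerInt \<sigma> \<and> cmod c = 1 \<and> \<omega> = omega_xc \<sigma> x c"
        then obtain x c where "x \<in> PerInt \<sigma>" "cmod c = 1" "\<omega> = omega_xc \<sigma> x c" by blast
        then have "\<omega> \<in> (\<lambda>(x, c). omega_xc \<sigma> x c) ` (PerInt \<sigma> \<times> sphere 0 1)"
          by (intro image_eqI[of _ _ "(x, c)"]) auto
        then show ?thesis by blast
      qed
    qed
    show "omega_x \<sigma> ` (- PerInt \<sigma>) \<union> (\<lambda>(x, c). omega_xc \<sigma> x c) ` (PerInt \<sigma> \<times> sphere 0 1) \<subseteq> DeltaA \<sigma>"
      using omega_x_ch omega_xc_ch by auto
  qed
  have P2: "inj_on (omega_x \<sigma>) (- PerInt \<sigma>)"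
  proof (rule inj_onI)
    fix x y assume "x \<in> - PerInt \<sigma>" "y \<in> - PerInt \<sigma>" and e: "omega_x \<sigma> x = omega_x \<sigma> y"
    have "\<forall>f\<in>CX. f x = (f::'a fn) y"
    proof
      fix f :: "'a fn" assume f: "f \<in> CX"
      show "f x = f y" using omx_emb[OF f, of x] omx_emb[OF f, of y] e by simp
    qed
    then show "x = y" by (rule pts_eq)
  qed
  have P3: "inj_on (\<lambda>(x, c). omega_xc \<sigma> x c) (PerInt \<sigma> \<times> sphere 0 1)"
  proof (rule inj_onI)
    fix p q assume p: "p \<in> PerInt \<sigma> \<times> sphere 0 1" and q: "q \<in> PerInt \<sigma> \<times> sphere 0 1"
      and e: "(\<lambda>(x, c). omega_xc \<sigma> x c) p = (\<lambda>(x, c). omega_xc \<sigma> x c) q"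
    obtain x c y d where pq: "p = (x, c)" "q = (y, d)" by (cases p, cases q) auto
    have xP: "x \<in> PerInt \<sigma>" and yP: "y \<in> PerInt \<sigma>" using p q pq by auto
    have e': "omega_xc \<sigma> x c = omega_xc \<sigma> y d" using e pq by simp
    have "\<forall>f\<in>CX. f x = (f::'a fn) y"
    proof
      fix f :: "'a fn" assume f: "f \<in> CX"
      show "f x = f y" using omxc_emb[OF xP f, of c] omxc_emb[OF yP f, of d] e' by simp
    qed
    then have xy: "x = y" by (rule pts_eq)
    obtain a where a: "a \<in> AA" "\<forall>c. omega_xc \<sigma> x c a = c" using omxc_bump[OF xP] by blast
    have "c = omega_xc \<sigma> x c a" using a(2) by simp
    also have "\<dots> = omega_xc \<sigma> x d a" using e' xy by simp
    also have "\<dots> = d" using a(2) by simp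
    finally have "c = d" .
    then show "p = q" using pq xy by simp
  qed
  have P4: "omega_x \<sigma> ` (- PerInt \<sigma>) \<inter> (\<lambda>(x, c). omega_xc \<sigma> x c) ` (PerInt \<sigma> \<times> sphere 0 1) = {}"
  proof (rule ccontr)
    assume "\<not> ?thesis"
    then obtain x y c where x: "x \<notin> PerInt \<sigma>" and y: "y \<in> PerInt \<sigma>" and e: "omega_x \<sigma> x = omega_xc \<sigma> y c"
      by auto
    have "\<forall>f\<in>CX. f x = (f::'a fn) y"
    proof
      fix f :: "'a fn" assume f: "f \<in> CX"
      show "f x = f y" using omx_emb[OF f, of x] omxc_emb[OF y f, of c] e by simp
    qed
    then have "x = y" by (rule pts_eq)
    then show False using x y by simp
  qed
  have P5: "\<forall>\<omega>\<in>DeltaA \<sigma>. \<forall>a\<in>commutant1 \<sigma>. \<omega> (ell_star \<sigma> a) = cnj (\<omega> a)"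
  proof (intro ballI)
    fix \<omega> a assume W: "\<omega> \<in> DeltaA \<sigma>" and A: "a \<in> commutant1 \<sigma>"
    from classify[OF W] show "\<omega> (ell_star \<sigma> a) = cnj (\<omega> a)"
    proof
      assume "\<exists>x. x \<notin> PerInt \<sigma> \<and> \<omega> = omega_x \<sigma> x"
      then obtain x where "\<omega> = omega_x \<sigma> x" by blast
      then show ?thesis using herm_x[OF A] by simp
    next
      assume "\<exists>x c. x \<in> PerInt \<sigma> \<and> cmod c = 1 \<and> \<omega> = omega_xc \<sigma> x c"
      then obtain x c where "x \<in> PerInt \<sigma>" "cmod c = 1" "\<omega> = omega_xc \<sigma> x c" by blast
      then show ?thesis using herm_xc[OF _ _ A] by simp
    qed
  qed
  show ?thesis
    by (intro conjI P1 P2 P3 P4 P5 restr_cont restr_surj)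
qed


end
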